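(* Let $D=\{z\in\mathbb{C}:|z-1/2|\le1/2\}$ and let $U\subset\mathbb{R}^2=\mathbb{C}$ be a bounded, mildly regular open set with $\operatorname{int}(D)\subset U$, $U\supset D$... more precisely $\bar U\supset D$, $x>0$ on $U$, and $0\le x\le1$, $|y|\le1/2$ for all $(x,y)\in\bar U$. Let $\mathcal{B}$ be an infinite subset of $I_1:=\{m+n\mathrm{i}:m\in\mathbb{N},n\in\mathbb{Z}\}$, $\theta_b(z)=1/(z+b)$, let $\tau(\mathcal{B})=\inf\{t>0:\sum_{b\in\mathcal{B}}|b|^{-2t}<\infty\}$, let $s>\tau(\mathcal{B})$, and let $v_s$ be the (unique up to scalar multiples) strictly positive continuous eigenfunction on $\bar U$ of $(L_sf)(z)=\sum_{b\in\mathcal{B}}|z+b|^{-2s}f(\theta_b(z))$. Let $R>2$ and $$C(R,s)=\exp\Big(\frac{-\sqrt5s}{\sqrt{R^2-R}}\Big)\Big(\frac{R}{R+\sqrt5+5/(4R)}\Big)^s.$$ Then for all $z\in\bar U$, $$\sum_{b\in\mathcal{B},|b|>R}\frac{v_s(\theta_b(z))}{|z+b|^{2s}}\ge C(R,s)v_s(0)\sum_{b\in\mathcal{B},|b|>R}\frac{1}{|b|^{2s}}.$$ Moreover, with $\theta_R=\arcsin(1/(R+\sqrt2))$: if $\mathcal{B}=I_1$ and $s>1$, then for all $z\in\bar U$ $$\sum_{b\in I_1,|b|>R}\frac{v_s(\theta_b(z))}{|z+b|^{2s}}\ge C(R,s)v_s(0)(\pi-2\theta_R)\frac{1}{2s-2}\Big(\frac{1}{R+\sqrt2}\Big)^{2s-2};$$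 and if $\mathcal{B}=I_2:=\{m+n\mathrm{i}:m\in\mathbb{N},n\in\mathbb{Z},n<0\}$ and $s>1$, then for all $z\in\bar U$ $$\sum_{b\in I_2,|b|>R}\frac{v_s(\theta_b(z))}{|z+b|^{2s}}\ge C(R,s)v_s(0)(\pi/2-2\theta_R)\frac{1}{2s-2}\Big(\frac{1}{R+\sqrt2}\Big)^{2s-2}.$$
   Context: A bounded open set $H\subset\mathbb{R}^n$ is mildly regular if there exist $\eta>0$ and $M\ge1$ such that whenever $x,y\in H$ and $\|x-y\|<\eta$, there is a Lipschitz map $\psi:[0,1]\to H$ with $\psi(0)=x$, $\psi(1)=y$ and $\int_0^1\|\psi'(t)\|\,dt\le M\|x-y\|$. $\mathbb{N}=\{1,2,\dots\}$. *)

theory Defs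
  imports "HOL-Analysis.Analysis"
begin

text \<open>Mild regularity of a (bounded open) set in the plane, identified with the complex numbers.
  The length of a Lipschitz path is the integral of the norm of its (a.e. existing) derivative.\<close>
definition mildly_regular :: "complex set \<Rightarrow> bool" where
  "mildly_regular H \<longleftrightarrow> bounded H \<and> open H \<and>
     (\<exists>\<eta>>0. \<exists>M\<ge>1. \<forall>x\<in>H. \<forall>y\<in>H. dist x y < \<eta> \<longrightarrow>
        (\<exists>\<psi> :: real \<Rightarrow> complex. (\<exists>L. L-lipschitz_on {0..1} \<psi>) \<and> \<psi> ` {0..1} \<subseteq> H \<and>
            \<psi> 0 = x \<and> \<psi> 1 = y \<and>
            integral {0..1} (\<lambda>t. norm (vector_derivative \<psi> (at t))) \<le> M * dist x y))"

text \<open>Gaussian-integer index sets (with \<open>\<nat> = {1,2,...}\<close>).\<close>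
definition I1 :: "complex set" where
  "I1 = {Complex (real m) (real_of_int n) | m n. m \<ge> (1::nat)}"

definition I2 :: "complex set" where
  "I2 = {Complex (real m) (real_of_int n) | m n. m \<ge> (1::nat) \<and> n < 0}"

definition theta :: "complex \<Rightarrow> complex \<Rightarrow> complex" where
  "theta b z = 1 / (z + b)"

definition tau :: "complex set \<Rightarrow> real" where
  "tau B = Inf {t. t > 0 \<and> (\<lambda>b. norm b powr (-2 * t)) summable_on B}"

definition CRs :: "real \<Rightarrow> real \<Rightarrow> real" where
  "CRs R s = exp (- sqrt 5 * s / sqrt (R^2 - R)) * (R / (R + sqrt 5 + 5 / (4 * R))) powr s"

definition thetaR :: "real \<Rightarrow> real" where
  "thetaR R = arcsin (1 / (R + sqrt 2))"

end

theory Submission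
  imports Defs
begin


definition Dk :: "complex set" where "Dk = cball (1/2) (1/2)"

definition Sp :: "real \<Rightarrow> complex \<Rightarrow> complex \<Rightarrow> complex \<Rightarrow> real" where
  "Sp s p w1 w2 = 2 * s * (ln (cmod (w2 - p)) - ln (cmod (w1 - p)))"

definition Gf :: "real \<Rightarrow> complex \<Rightarrow> complex \<Rightarrow> real" where
  "Gf s w1 w2 = max 0 (SUP p\<in>{p. Re p \<le> -1}. Sp s p w1 w2)"

lemma Dk_re: assumes "w \<in> Dk" shows "0 \<le> Re w" "Re w \<le> 1"
proof -
  have "cmod (w - 1/2) \<le> 1/2" using assms by (simp add: Dk_def dist_norm norm_minus_commute)
  moreover have "\<bar>Re (w - 1/2)\<bar> \<le> cmod (w - 1/2)" by (rule abs_Re_le_cmod)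
  ultimately show "0 \<le> Re w" "Re w \<le> 1" by auto
qed

lemma Dk_diam: assumes "w1 \<in> Dk" "w2 \<in> Dk" shows "cmod (w1 - w2) \<le> 1"
proof -
  have "cmod (w1 - 1/2) \<le> 1/2" "cmod (w2 - 1/2) \<le> 1/2" using assms
    by (auto simp add: Dk_def dist_norm norm_minus_commute)
  moreover have "cmod (w1 - w2) \<le> cmod (w1 - 1/2) + cmod (w2 - 1/2)"
    using norm_triangle_ineq4[of "w1 - 1/2" "w2 - 1/2"] by simp
  ultimately show ?thesis by simp
qed

lemma cmod_ge_Re: "Re z \<le> cmod z"
  using complex_Re_le_cmod by blast

lemma theta_Dk: assumes "0 \<le> Re w" "1 \<le> Re b" shows "theta b w \<in> Dk"
proof -
  define u where "u = w + b"
  have ru: "1 \<le> Re u" using assms by (simp add: u_def)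
  have u0: "u \<noteq> 0" using ru by auto
  have cu: "cmod u > 0" using u0 by simp
  have "(cmod (2 - u))^2 \<le> (cmod u)^2"
  proof -
    have "(cmod (2 - u))^2 = (2 - Re u)^2 + (Im u)^2" by (simp add: cmod_power2)
    moreover have "(cmod u)^2 = (Re u)^2 + (Im u)^2" by (simp add: cmod_power2)
    ultimately show ?thesis using ru by (simp add: power2_eq_square algebra_simps)
  qed
  hence c2: "cmod (2 - u) \<le> cmod u"
    using norm_ge_zero power2_le_imp_le by blast
  have eq: "1/u - 1/2 = (2 - u) / (2*u)" using u0 by (simp add: field_simps)
  have "cmod (1/u - 1/2) = cmod (2 - u) / (2 * cmod u)"
    unfolding eq by (simp add: norm_divide norm_mult)
  also have "\<dots> \<le> 1/2" using c2 cu by (simp add: divide_le_eq)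
  finally show ?thesis
    by (simp add: Dk_def theta_def u_def dist_norm norm_minus_commute)
qed

lemma aux_div_minus1: "(1::real) \<le> b \<Longrightarrow> a / b - 1 = (a - b) / b" by (simp add: field_simps)

lemma Sp_bound:
  assumes "0 \<le> Re w1" "0 \<le> Re w2" "Re p \<le> -1" "0 \<le> s"
  shows "Sp s p w1 w2 \<le> 2 * s * cmod (w1 - w2)"
proof -
  have a1: "1 \<le> cmod (w1 - p)" using assms cmod_ge_Re[of "w1 - p"] by simp
  have a2: "1 \<le> cmod (w2 - p)" using assms cmod_ge_Re[of "w2 - p"] by simp
  have tri: "cmod (w2 - p) \<le> cmod (w1 - p) + cmod (w1 - w2)"
    using norm_triangle_ineq[of "w1 - p" "w2 - w1"] by (simp add: norm_minus_commute)
  have "ln (cmod (w2 - p)) - ln (cmod (w1 - p)) = ln (cmod (w2 - p) / cmod (w1 - p))"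
    proof -
    have "0 < cmod (w2 - p)" "0 < cmod (w1 - p)" using a1 a2 by linarith+
    thus ?thesis by (metis ln_divide_pos)
  qed
  also have "\<dots> \<le> cmod (w2 - p) / cmod (w1 - p) - 1"
    using a1 a2 by (intro ln_le_minus_one divide_pos_pos) linarith+
  also have "\<dots> = (cmod (w2 - p) - cmod (w1 - p)) / cmod (w1 - p)"
    using a1 aux_div_minus1 by blast
  also have "\<dots> \<le> cmod (w1 - w2) / cmod (w1 - p)"
    using a1 tri by (intro divide_right_mono) auto
  also have "\<dots> \<le> cmod (w1 - w2)"
    using a1 by (simp add: divide_le_eq mult_le_cancel_left1)
  finally show ?thesis unfolding Sp_def using assms(4) by (simp add: mult_left_mono)
qed

lemma Sp_bdd:
  assumes "0 \<le> Re w1" "0 \<le> Re w2" "0 \<le> s"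
  shows "bdd_above ((\<lambda>p. Sp s p w1 w2) ` {p. Re p \<le> -1})"
  using Sp_bound[OF assms(1,2) _ assms(3)] unfolding bdd_above_def by blast

lemma Gf_nonneg: "0 \<le> Gf s w1 w2" by (simp add: Gf_def)

lemma Gf_zero_bound:
  assumes "0 \<le> Re w" "0 \<le> s"
  shows "Gf s 0 w \<le> 2 * s * cmod w"
proof -
  have "(SUP p\<in>{p. Re p \<le> -1}. Sp s p 0 w) \<le> 2 * s * cmod (0 - w)"
  proof (rule cSUP_least)
    show "{p. Re p \<le> -1} \<noteq> {}" by (auto intro: exI[of _ "-1"])
    fix p assume "p \<in> {p. Re p \<le> -1}"
    thus "Sp s p 0 w \<le> 2 * s * cmod (0 - w)" using Sp_bound[of 0 w p s] assms by auto
  qed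
  thus ?thesis unfolding Gf_def using assms by simp
qed

lemma Sp_upper:
  assumes "0 \<le> Re w1" "0 \<le> Re w2" "0 \<le> s" "Re p \<le> -1"
  shows "Sp s p w1 w2 \<le> Gf s w1 w2"
proof -
  have "Sp s p w1 w2 \<le> (SUP p\<in>{p. Re p \<le> -1}. Sp s p w1 w2)"
    by (rule cSUP_upper) (use assms Sp_bdd in auto)
  thus ?thesis unfolding Gf_def by simp
qed

lemma theta_minus_p:
  assumes "0 \<le> Re w" "1 \<le> Re b" "p \<noteq> 0"
  shows "cmod (theta b w - p) = cmod p * cmod (w - (1/p - b)) / cmod (w + b)"
proof -
  have u0: "w + b \<noteq> 0" using assms by (metis add_nonneg_pos linorder_not_le order_less_le_trans
        zero_complex.simps(1) zero_less_one plus_complex.simps(1) order.refl)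
  have e1: "theta b w - p = (1 - p*(w+b))/(w+b)"
    using u0 by (simp add: theta_def field_simps)
  have e2: "1 - p*(w+b) = - p * (w - (1/p - b))"
    using assms(3) by (simp add: field_simps)
  have "theta b w - p = - p * (w - (1/p - b)) / (w + b)"
    using e1 e2 by simp
  thus ?thesis by (simp add: norm_divide norm_mult)
qed

lemma Sp_invariance_pt:
  assumes "0 \<le> Re w1" "0 \<le> Re w2" "1 \<le> Re b" "Re p \<le> -1"
  shows "Sp s (-b) w1 w2 + Sp s p (theta b w1) (theta b w2) = Sp s (1/p - b) w1 w2"
proof -
  have p0: "p \<noteq> 0" using assms(4) by auto
  have cp: "cmod p > 0" using p0 by simp
  have re1p: "Re (1/p) \<le> 0" using assms(4)
    by (simp add: Re_divide divide_nonpos_nonneg)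
  have rq: "Re (1/p - b) \<le> -1" using re1p assms(3) by simp
  have "1 \<le> cmod (w1 - (1/p - b))" using rq assms(1) cmod_ge_Re[of "w1 - (1/p - b)"] by simp
  hence q1: "cmod (w1 - (1/p - b)) > 0" by linarith
  have "1 \<le> cmod (w2 - (1/p - b))" using rq assms(2) cmod_ge_Re[of "w2 - (1/p - b)"] by simp
  hence q2: "cmod (w2 - (1/p - b)) > 0" by linarith
  have "1 \<le> cmod (w1 + b)" using assms(1,3) cmod_ge_Re[of "w1 + b"] by simp
  hence b1: "cmod (w1 + b) > 0" by linarith
  have "1 \<le> cmod (w2 + b)" using assms(2,3) cmod_ge_Re[of "w2 + b"] by simp
  hence b2: "cmod (w2 + b) > 0" by linarith
  show ?thesis
    unfolding Sp_def theta_minus_p[OF assms(1,3) p0] theta_minus_p[OF assms(2,3) p0]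
    using cp q1 q2 b1 b2 by (simp add: ln_div ln_mult algebra_simps)
qed

lemma Gf_invariance:
  assumes "0 \<le> Re w1" "0 \<le> Re w2" "1 \<le> Re b" "0 \<le> s"
  shows "Sp s (-b) w1 w2 + Gf s (theta b w1) (theta b w2) \<le> Gf s w1 w2"
proof -
  have t1: "0 \<le> Re (theta b w1)" using theta_Dk[OF assms(1,3)] Dk_re by blast
  have t2: "0 \<le> Re (theta b w2)" using theta_Dk[OF assms(2,3)] Dk_re by blast
  have mb: "Re (-b) \<le> -1" using assms(3) by simp
  have A: "Sp s (-b) w1 w2 \<le> Gf s w1 w2" by (rule Sp_upper) (use assms mb in auto)
  have B: "(SUP p\<in>{p. Re p \<le> -1}. Sp s p (theta b w1) (theta b w2)) \<le> Gf s w1 w2 - Sp s (-b) w1 w2"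
  proof (rule cSUP_least)
    show "{p. Re p \<le> -1} \<noteq> {}" by (auto intro: exI[of _ "-1"])
  next
    fix p assume "p \<in> {p. Re p \<le> -1}"
    hence p: "Re p \<le> -1" by simp
    have p0: "p \<noteq> 0" using p by auto
    have "Re (1/p) \<le> 0" using p by (simp add: Re_divide divide_nonpos_nonneg)
    hence rq: "Re (1/p - b) \<le> -1" using assms(3) by simp
    have "Sp s p (theta b w1) (theta b w2) = Sp s (1/p - b) w1 w2 - Sp s (-b) w1 w2"
      using Sp_invariance_pt[OF assms(1,2,3) p, of s] by simp
    also have "\<dots> \<le> Gf s w1 w2 - Sp s (-b) w1 w2"
      using Sp_upper[OF assms(1,2,4) rq] by simp
    finally show "Sp s p (theta b w1) (theta b w2) \<le> Gf s w1 w2 - Sp s (-b) w1 w2" .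
  qed
  show ?thesis unfolding Gf_def[of s "theta b w1"] using A B by (simp add: max_def)
qed

lemma aux_add_inv: "(1::real) \<le> c \<Longrightarrow> c + 1 / c = (c^2 + 1) / c" by (simp add: field_simps power2_eq_square)

lemma contraction2:
  assumes "0 \<le> Re w" "1 \<le> Re b" "1 \<le> Re b'"
  shows "2 \<le> cmod (w + b) * cmod (theta b w + b')"
proof -
  define c where "c = w + b"
  have rc: "1 \<le> Re c" using assms by (simp add: c_def)
  have cc: "1 \<le> cmod c" using rc cmod_ge_Re[of c] by simp
  have c0: "c \<noteq> 0" using cc by auto
  have "Re (1/c) = Re c / (cmod c)^2" by (simp add: Re_divide cmod_power2)
  hence "Re (1/c + b') = Re c / (cmod c)^2 + Re b'" by simp
  hence "Re c / (cmod c)^2 + 1 \<le> cmod (1/c + b')"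
    using cmod_ge_Re[of "1/c + b'"] assms(3) by simp
  moreover have "1 / (cmod c)^2 \<le> Re c / (cmod c)^2" using rc cc by (simp add: divide_right_mono)
  ultimately have h: "1/(cmod c)^2 + 1 \<le> cmod (1/c + b')" by simp
  have "cmod c * (1/(cmod c)^2 + 1) = cmod c + 1 / cmod c"
    using cc by (simp add: field_simps power2_eq_square)
  also have "2 \<le> cmod c + 1 / cmod c"
  proof -
    have "0 \<le> (cmod c - 1)^2" by simp
    hence h2: "2 * cmod c \<le> (cmod c)^2 + 1" by (simp add: power2_eq_square algebra_simps)
    have "cmod c + 1 / cmod c = ((cmod c)^2 + 1) / cmod c" using cc aux_add_inv by blast
    also have "2 \<le> ((cmod c)^2 + 1) / cmod c" using h2 cc c0 by (simp add: le_divide_eq)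
    finally show ?thesis by simp
  qed
  finally have "2 \<le> cmod c * (1/(cmod c)^2 + 1)" by simp
  also have "\<dots> \<le> cmod c * cmod (1/c + b')" using h cc by (intro mult_left_mono) auto
  finally show ?thesis by (simp add: c_def theta_def)
qed

lemma theta_dist:
  assumes "0 \<le> Re w1" "0 \<le> Re w2" "1 \<le> Re b"
  shows "cmod (theta b w1 - theta b w2) = cmod (w1 - w2) / (cmod (w1 + b) * cmod (w2 + b))"
proof -
  have b1: "w1 + b \<noteq> 0" using assms(1,3) by (metis add_nonneg_pos linorder_not_le order_less_le_trans
        zero_complex.simps(1) zero_less_one plus_complex.simps(1) order.refl)
  have b2: "w2 + b \<noteq> 0" using assms(2,3) by (metis add_nonneg_pos linorder_not_le order_less_le_trans
        zero_complex.simps(1) zero_less_one plus_complex.simps(1) order.refl)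
  have "theta b w1 - theta b w2 = (w2 - w1) / ((w1 + b) * (w2 + b))"
    using b1 b2 by (simp add: theta_def field_simps)
  thus ?thesis by (simp add: norm_divide norm_mult norm_minus_commute)
qed


lemma nz_of_ge1: "1 \<le> cmod (x::complex) \<Longrightarrow> x \<noteq> 0" by auto

lemma cmod_ge1: assumes "0 \<le> Re w" "1 \<le> Re b" shows "1 \<le> cmod (w + b)"
  using assms cmod_ge_Re[of "w + b"] by simp

locale eig =
  fixes B :: "complex set" and s :: real and v :: "complex \<Rightarrow> real" and lam :: real
  assumes Bre: "\<And>b. b \<in> B \<Longrightarrow> 1 \<le> Re b"
    and Bne: "B \<noteq> {}"
    and spos: "0 < s"
    and vpos: "\<And>z. z \<in> Dk \<Longrightarrow> 0 < v z"
    and vcont: "continuous_on Dk v"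
    and eq: "\<And>z. z \<in> Dk \<Longrightarrow>
      ((\<lambda>b. cmod (z + b) powr (-2 * s) * v (theta b z)) has_sum (lam * v z)) B"
begin

lemma term_pos: assumes "z \<in> Dk" "b \<in> B"
  shows "0 < cmod (z + b) powr (-2 * s) * v (theta b z)"
proof -
  have "1 \<le> cmod (z + b)" using cmod_ge1 Dk_re(1)[OF assms(1)] Bre[OF assms(2)] by blast
  moreover have "0 < v (theta b z)" using vpos theta_Dk Dk_re(1)[OF assms(1)] Bre[OF assms(2)] by blast
  ultimately show ?thesis using nz_of_ge1 by simp
qed

lemma lam_pos: "0 < lam"
proof -
  obtain b0 where b0: "b0 \<in> B" using Bne by blast
  define z :: complex where "z = 1/2"
  have z: "z \<in> Dk" by (simp add: Dk_def z_def)
  define f where "f = (\<lambda>b. cmod (z + b) powr (-2 * s) * v (theta b z))"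
  have "sum f {b0} \<le> lam * v z"
    by (rule has_sum_mono2[OF has_sum_finite[of "{b0}" f] eq[OF z, folded f_def]])
       (use b0 term_pos[OF z] in \<open>auto simp: f_def less_imp_le\<close>)
  moreover have "0 < f b0" using term_pos[OF z b0] by (simp add: f_def)
  ultimately have "0 < lam * v z" by simp
  thus ?thesis using vpos[OF z] by (simp add: zero_less_mult_iff)
qed

lemma one_step:
  assumes w1: "w1 \<in> Dk" and w2: "w2 \<in> Dk"
    and H: "\<And>b. b \<in> B \<Longrightarrow> ln (v (theta b w1)) - ln (v (theta b w2)) \<le> K - Sp s (-b) w1 w2"
  shows "ln (v w1) - ln (v w2) \<le> K"
proof -
  have ineq: "cmod (w1 + b) powr (-2 * s) * v (theta b w1)
      \<le> exp K * (cmod (w2 + b) powr (-2 * s) * v (theta b w2))" if b: "b \<in> B" for b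
  proof -
    define a1 a2 t1 t2 where "a1 = cmod (w1 + b)" and "a2 = cmod (w2 + b)"
      and "t1 = v (theta b w1)" and "t2 = v (theta b w2)"
    have a1: "1 \<le> a1" using cmod_ge1[OF Dk_re(1)[OF w1] Bre[OF b]] by (simp add: a1_def)
    have a2: "1 \<le> a2" using cmod_ge1[OF Dk_re(1)[OF w2] Bre[OF b]] by (simp add: a2_def)
    have a1': "a1 \<noteq> 0" "a2 \<noteq> 0" using a1 a2 by auto
    have t1: "0 < t1" using vpos theta_Dk Dk_re(1)[OF w1] Bre[OF b] by (simp add: t1_def)
    have t2: "0 < t2" using vpos theta_Dk Dk_re(1)[OF w2] Bre[OF b] by (simp add: t2_def)
    have Sp: "Sp s (-b) w1 w2 = 2 * s * (ln a2 - ln a1)" by (simp add: Sp_def a1_def a2_def)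
    have h: "ln t1 - ln t2 \<le> K - 2 * s * (ln a2 - ln a1)" using H[OF b] Sp by (simp add: t1_def t2_def)
    have "a1 powr (-2 * s) * t1 = exp (-2 * s * ln a1) * exp (ln t1)"
      using a1' t1 by (simp add: powr_def)
    also have "\<dots> = exp (-2 * s * ln a1 + ln t1)" by (rule exp_add[symmetric])
    also have "\<dots> \<le> exp (K + (-2 * s * ln a2 + ln t2))" using h by (simp add: algebra_simps)
    also have "\<dots> = exp K * (exp (-2 * s * ln a2) * exp (ln t2))" by (simp only: exp_add)
    also have "\<dots> = exp K * (a2 powr (-2 * s) * t2)"
      using a1' t2 by (simp add: powr_def)
    finally show ?thesis by (simp add: a1_def a2_def t1_def t2_def)
  qed
  have "lam * v w1 \<le> exp K * (lam * v w2)"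
    by (rule has_sum_mono[OF eq[OF w1] has_sum_cmult_right[OF eq[OF w2]]]) (use ineq in auto)
  hence "v w1 \<le> exp K * v w2" using lam_pos by (simp add: algebra_simps)
  hence "ln (v w1) \<le> ln (exp K * v w2)" using vpos[OF w1] by simp
  also have "\<dots> = K + ln (v w2)" using vpos[OF w2] by (simp add: ln_mult)
  finally show ?thesis by simp
qed

lemma two_step_dist:
  assumes w1: "w1 \<in> Dk" and w2: "w2 \<in> Dk" and b: "b \<in> B" and b': "b' \<in> B"
  shows "cmod (theta b' (theta b w1) - theta b' (theta b w2)) \<le> cmod (w1 - w2) / 4"
proof -
  define u1 u2 where "u1 = theta b w1" and "u2 = theta b w2"
  have r1: "0 \<le> Re w1" "0 \<le> Re w2" using Dk_re w1 w2 by auto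
  have ru: "0 \<le> Re u1" "0 \<le> Re u2" using theta_Dk Dk_re r1 Bre[OF b] by (auto simp: u1_def u2_def)
  have c1: "2 \<le> cmod (w1 + b) * cmod (u1 + b')" using contraction2[OF r1(1) Bre[OF b] Bre[OF b']] by (simp add: u1_def)
  have c2: "2 \<le> cmod (w2 + b) * cmod (u2 + b')" using contraction2[OF r1(2) Bre[OF b] Bre[OF b']] by (simp add: u2_def)
  have "cmod (theta b' u1 - theta b' u2) = cmod (u1 - u2) / (cmod (u1 + b') * cmod (u2 + b'))"
    by (rule theta_dist[OF ru Bre[OF b']])
  also have "cmod (u1 - u2) = cmod (w1 - w2) / (cmod (w1 + b) * cmod (w2 + b))"
    unfolding u1_def u2_def by (rule theta_dist[OF r1 Bre[OF b]])
  finally have "cmod (theta b' u1 - theta b' u2) =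
      cmod (w1 - w2) / ((cmod (w1 + b) * cmod (u1 + b')) * (cmod (w2 + b) * cmod (u2 + b')))"
    by (simp add: field_simps mult.assoc)
  also have "\<dots> \<le> cmod (w1 - w2) / 4"
  proof -
    have "2 * 2 \<le> (cmod (w1 + b) * cmod (u1 + b')) * (cmod (w2 + b) * cmod (u2 + b'))"
      using c1 c2 by (intro mult_mono) auto
    hence P4: "4 \<le> (cmod (w1 + b) * cmod (u1 + b')) * (cmod (w2 + b) * cmod (u2 + b'))" by simp
    show ?thesis by (rule divide_left_mono[OF P4]) (use P4 in auto)
  qed
  finally show ?thesis by (simp add: u1_def u2_def)
qed

lemma log_lip:
  assumes w1: "w1 \<in> Dk" and w2: "w2 \<in> Dk"
  shows "ln (v w1) - ln (v w2) \<le> Gf s w1 w2"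
proof (rule field_le_epsilon)
  fix \<epsilon> :: real assume e: "0 < \<epsilon>"
  have "continuous_on Dk (\<lambda>z. ln (v z))"
    by (rule continuous_on_ln[OF vcont]) (use vpos in force)
  hence uc: "uniformly_continuous_on Dk (\<lambda>z. ln (v z))"
    by (intro compact_uniformly_continuous) (auto simp: Dk_def)
  obtain \<delta> where d: "0 < \<delta>" and dd: "\<And>x x'. x \<in> Dk \<Longrightarrow> x' \<in> Dk \<Longrightarrow> dist x' x < \<delta> \<Longrightarrow>
      dist (ln (v x')) (ln (v x)) < \<epsilon>"
    using uc e unfolding uniformly_continuous_on_def by metis
  have claim: "\<forall>w1 w2. w1 \<in> Dk \<longrightarrow> w2 \<in> Dk \<longrightarrow> cmod (w1 - w2) < \<delta> * 4^n \<longrightarrow>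
      ln (v w1) - ln (v w2) \<le> Gf s w1 w2 + \<epsilon>" for n
  proof (induction n)
    case 0
    show ?case
    proof (intro allI impI)
      fix w1 w2 assume a: "w1 \<in> Dk" "w2 \<in> Dk" "cmod (w1 - w2) < \<delta> * 4^0"
      have "dist (ln (v w1)) (ln (v w2)) < \<epsilon>" using dd[OF a(2) a(1)] a(3) by (simp add: dist_norm)
      thus "ln (v w1) - ln (v w2) \<le> Gf s w1 w2 + \<epsilon>" using Gf_nonneg[of s w1 w2]
        by (simp add: dist_real_def)
    qed
  next
    case (Suc n)
    show ?case
    proof (intro allI impI)
      fix w1 w2 assume a: "w1 \<in> Dk" "w2 \<in> Dk" "cmod (w1 - w2) < \<delta> * 4^Suc n"
      have r: "0 \<le> Re w1" "0 \<le> Re w2" using Dk_re a by auto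
      show "ln (v w1) - ln (v w2) \<le> Gf s w1 w2 + \<epsilon>"
      proof (rule one_step[OF a(1,2)])
        fix b assume b: "b \<in> B"
        define u1 u2 where "u1 = theta b w1" and "u2 = theta b w2"
        have u: "u1 \<in> Dk" "u2 \<in> Dk" using theta_Dk r Bre[OF b] by (auto simp: u1_def u2_def)
        have ru: "0 \<le> Re u1" "0 \<le> Re u2" using Dk_re u by auto
        have inv1: "Sp s (-b) w1 w2 + Gf s u1 u2 \<le> Gf s w1 w2"
          unfolding u1_def u2_def by (rule Gf_invariance[OF r Bre[OF b]]) (use spos in auto)
        have "ln (v u1) - ln (v u2) \<le> Gf s w1 w2 + \<epsilon> - Sp s (-b) w1 w2"
        proof (rule one_step[OF u])
          fix b' assume b': "b' \<in> B"
          define y1 y2 where "y1 = theta b' u1" and "y2 = theta b' u2"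
          have y: "y1 \<in> Dk" "y2 \<in> Dk" using theta_Dk ru Bre[OF b'] by (auto simp: y1_def y2_def)
          have inv2: "Sp s (-b') u1 u2 + Gf s y1 y2 \<le> Gf s u1 u2"
            unfolding y1_def y2_def by (rule Gf_invariance[OF ru Bre[OF b']]) (use spos in auto)
          have "cmod (y1 - y2) \<le> cmod (w1 - w2) / 4"
            using two_step_dist[OF a(1,2) b b'] by (simp add: y1_def y2_def u1_def u2_def)
          also have "\<dots> < \<delta> * 4^n" using a(3) by simp
          finally have "ln (v y1) - ln (v y2) \<le> Gf s y1 y2 + \<epsilon>" using Suc.IH y by blast
          thus "ln (v (theta b' u1)) - ln (v (theta b' u2))
              \<le> Gf s w1 w2 + \<epsilon> - Sp s (-b) w1 w2 - Sp s (-b') u1 u2"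
            using inv1 inv2 by (simp add: y1_def y2_def)
        qed
        thus "ln (v (theta b w1)) - ln (v (theta b w2)) \<le> Gf s w1 w2 + \<epsilon> - Sp s (-b) w1 w2"
          by (simp add: u1_def u2_def)
      qed
    qed
  qed
  obtain n where n: "1 / \<delta> < 4 ^ n" using real_arch_pow[of 4 "1/\<delta>"] by auto
  have "1 < \<delta> * 4^n" using n d by (simp add: field_simps)
  moreover have "cmod (w1 - w2) \<le> 1" by (rule Dk_diam[OF w1 w2])
  ultimately have "cmod (w1 - w2) < \<delta> * 4^n" by linarith
  thus "ln (v w1) - ln (v w2) \<le> Gf s w1 w2 + \<epsilon>" using claim[of n] w1 w2 by blast
qed

lemma v_lower:
  assumes w: "w \<in> Dk"
  shows "exp (- (2 * s * cmod w)) * v 0 \<le> v w"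
proof -
  have z: "(0::complex) \<in> Dk" by (simp add: Dk_def)
  have "ln (v 0) - ln (v w) \<le> Gf s 0 w" by (rule log_lip[OF z w])
  also have "\<dots> \<le> 2 * s * cmod w" by (rule Gf_zero_bound) (use Dk_re[OF w] spos in auto)
  finally have "ln (v 0) \<le> 2 * s * cmod w + ln (v w)" by simp
  hence "v 0 \<le> exp (2 * s * cmod w + ln (v w))" using vpos[OF z]
    by (metis exp_le_cancel_iff exp_ln)
  also have "\<dots> = exp (2 * s * cmod w) * v w" using vpos[OF w] by (simp add: exp_add)
  finally show ?thesis by (simp add: exp_minus field_simps)
qed

end


definition Fa :: "real \<Rightarrow> real \<Rightarrow> real" where
  "Fa c y = (y * sqrt (c^2 - y^2) + c^2 * arcsin (y / c)) / 2"

lemma Fa_deriv: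
  assumes c: "0 < c" and y: "-c < y" "y < c"
  shows "(Fa c has_real_derivative sqrt (c^2 - y^2)) (at y)"
proof -
  define P where "P = c^2 - y^2"
  have ay: "\<bar>y\<bar> < c" using y by auto
  have "\<bar>y\<bar>^2 < c^2" using power_strict_mono[OF ay abs_ge_zero, of 2] by simp
  hence P: "0 < P" unfolding P_def by simp
  define q where "q = sqrt P"
  have q: "0 < q" using P by (simp add: q_def)
  have qq: "q^2 = P" using P by (simp add: q_def)
  have yc: "-1 < y / c" "y / c < 1" using c y by (simp_all add: field_simps)
  have d0: "((\<lambda>y. c^2 - y^2) has_real_derivative (- (2 * y))) (at y)"
    by (auto intro!: derivative_eq_intros)
  have d1: "((\<lambda>y. sqrt (c^2 - y^2)) has_real_derivative inverse (sqrt P) / 2 * (- (2 * y))) (at y)"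
    using DERIV_chain2[where f=sqrt and g="\<lambda>y. c^2 - y^2", OF DERIV_real_sqrt[OF P[unfolded P_def]] d0]
    by (simp add: P_def)
  have d00: "((\<lambda>y. y / c) has_real_derivative (1 / c)) (at y)"
    using c by (auto intro!: derivative_eq_intros)
  have d2: "((\<lambda>y. arcsin (y / c)) has_real_derivative inverse (sqrt (1 - (y/c)^2)) * (1 / c)) (at y)"
    using DERIV_chain2[where f=arcsin and g="\<lambda>y. y / c", OF DERIV_arcsin[OF yc] d00] by simp
  have e1: "((\<lambda>y. y * sqrt (c^2 - y^2)) has_real_derivative
      (1 * sqrt (c^2 - y^2) + (inverse (sqrt P) / 2 * (- (2 * y))) * y)) (at y)"
    using DERIV_mult[OF DERIV_ident d1] by simp
  have e2: "((\<lambda>y. c^2 * arcsin (y / c)) has_real_derivative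
      c^2 * (inverse (sqrt (1 - (y/c)^2)) * (1 / c))) (at y)"
    using DERIV_cmult[OF d2] by simp
  have d: "(Fa c has_real_derivative
      ((1 * sqrt (c^2 - y^2) + (inverse (sqrt P) / 2 * (- (2 * y))) * y) +
        c^2 * (inverse (sqrt (1 - (y/c)^2)) * (1 / c))) / 2) (at y)"
    unfolding Fa_def by (rule DERIV_cdivide[OF DERIV_add[OF e1 e2]])
  have s1: "sqrt (1 - (y/c)^2) = q / c"
  proof -
    have "1 - (y/c)^2 = P / c^2" using c by (simp add: P_def field_simps)
    thus ?thesis using c by (simp add: q_def real_sqrt_divide)
  qed
  let ?E = "((1 * sqrt (c^2 - y^2) + (inverse (sqrt P) / 2 * (- (2 * y))) * y) +
        c^2 * (inverse (sqrt (1 - (y/c)^2)) * (1 / c))) / 2"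
  have "?E = (q - y^2 / q + c^2 / q) / 2"
    using c q unfolding s1 P_def[symmetric] q_def[symmetric] by (simp add: field_simps power2_eq_square)
  also have "\<dots> = q" using q qq by (simp add: P_def field_simps power2_eq_square)
  finally have eqE: "?E = sqrt (c^2 - y^2)" by (simp add: q_def P_def)
  show ?thesis using d by (simp only: eqE)
qed

lemma Fa_cont: assumes "0 < c" "0 \<le> a" "b \<le> c" shows "continuous_on {a..b} (Fa c)"
  unfolding Fa_def using assms
  by (intro continuous_intros continuous_on_arcsin) (auto simp: field_simps)

lemma int_sqrt_gen:
  assumes c: "0 < c" and ab: "0 \<le> a" "a \<le> b" "b \<le> c"
  shows "((\<lambda>y. sqrt (c^2 - y^2)) has_integral (Fa c b - Fa c a)) {a..b}"
proof (rule fundamental_theorem_of_calculus_interior[OF ab(2) Fa_cont[OF c ab(1,3)]])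
  fix x assume "x \<in> {a<..<b}"
  hence "-c < x" "x < c" using ab c by auto
  thus "(Fa c has_vector_derivative sqrt (c^2 - x^2)) (at x)"
    using Fa_deriv[OF c] by (simp add: has_real_derivative_iff_has_vector_derivative)
qed

lemma int_quarter:
  assumes c: "0 < c"
  shows "((\<lambda>y. sqrt (c^2 - y^2)) has_integral (pi / 4 * c^2)) {0..c}"
proof -
  have eq: "Fa c c - Fa c 0 = pi / 4 * c^2" using c by (simp add: Fa_def)
  have "((\<lambda>y. sqrt (c^2 - y^2)) has_integral (Fa c c - Fa c 0)) {0..c}"
    using int_sqrt_gen[OF c order.refl less_imp_le[OF c] order.refl] by simp
  thus ?thesis by (simp only: eq)
qed

definition A1 :: "real \<Rightarrow> real" where
  "A1 t = pi / 4 * t^2 - t^2 * arcsin (1 / t) - sqrt (t^2 - 1) + 1"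

lemma int_A1:
  assumes t: "2 \<le> t^2" "0 < t"
  shows "((\<lambda>y. sqrt (t^2 - y^2) - 1) has_integral A1 t) {1..sqrt (t^2 - 1)}"
proof -
  define \<sigma> where "\<sigma> = sqrt (t^2 - 1)"
  have t1: "1 \<le> t" using power2_le_imp_le[of 1 t] t by simp
  have s1: "1 \<le> \<sigma>" using t by (simp add: \<sigma>_def)
  have st: "\<sigma> \<le> t" using t by (simp add: \<sigma>_def real_le_lsqrt real_sqrt_le_iff)
  have h: "((\<lambda>y. sqrt (t^2 - y^2)) has_integral (Fa t \<sigma> - Fa t 1)) {1..\<sigma>}"
    by (rule int_sqrt_gen) (use t s1 st in auto)
  have h2: "((\<lambda>y. 1) has_integral (\<sigma> - 1)) {1..\<sigma>}"
    using has_integral_const_real[of "1::real" 1 \<sigma>] s1 by simp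
  have ss: "t^2 - \<sigma>^2 = 1" using t by (simp add: \<sigma>_def)
  have ar: "arcsin (\<sigma> / t) = pi / 2 - arcsin (1 / t)"
  proof -
    have "\<sigma> / t = sqrt (1 - (1/t)^2)" using t
      by (simp add: \<sigma>_def real_sqrt_divide[symmetric] field_simps power2_eq_square)
         (simp add: real_sqrt_divide)
    moreover have "arccos (1/t) = arcsin (sqrt (1 - (1/t)^2))"
      by (rule arccos_arcsin_sqrt_pos) (use t t1 in \<open>auto simp: field_simps\<close>)
    moreover have "arccos (1/t) = pi/2 - arcsin (1/t)"
      by (rule arccos_arcsin_eq) (use t t1 in \<open>auto simp: field_simps\<close>)
    ultimately show ?thesis by simp
  qed
  have f1: "Fa t \<sigma> = (\<sigma> + t^2 * (pi / 2 - arcsin (1 / t))) / 2"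
    unfolding Fa_def ss ar by simp
  have f2: "Fa t 1 = (\<sigma> + t^2 * arcsin (1 / t)) / 2"
    unfolding Fa_def by (simp add: \<sigma>_def)
  have val: "Fa t \<sigma> - Fa t 1 - (\<sigma> - 1) = A1 t"
    unfolding f1 f2 A1_def by (simp add: \<sigma>_def[symmetric] field_simps)
  show ?thesis using has_integral_diff[OF h h2] val by (simp add: \<sigma>_def)
qed


definition rowc :: "real \<Rightarrow> nat \<Rightarrow> nat" where
  "rowc c n = card {m::nat. 1 \<le> m \<and> real m ^ 2 + real n ^ 2 \<le> c ^ 2}"

lemma rowc_set:
  assumes c: "0 \<le> c" and n: "real n \<le> c"
  shows "{m::nat. 1 \<le> m \<and> real m ^ 2 + real n ^ 2 \<le> c ^ 2} = {1..nat \<lfloor>sqrt (c^2 - real n ^ 2)\<rfloor>}"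
proof -
  define X where "X = sqrt (c^2 - real n ^ 2)"
  have "real n ^ 2 \<le> c^2" using c n by (intro power_mono) auto
  hence P: "0 \<le> c^2 - real n ^ 2" by simp
  have X: "0 \<le> X" using P by (simp add: X_def)
  have XX: "X^2 = c^2 - real n ^ 2" using P by (simp add: X_def)
  have eqv: "real m ^ 2 + real n ^ 2 \<le> c ^ 2 \<longleftrightarrow> m \<le> nat \<lfloor>X\<rfloor>" for m :: nat
  proof -
    have "real m ^ 2 + real n ^ 2 \<le> c ^ 2 \<longleftrightarrow> real m ^ 2 \<le> X^2" unfolding XX by linarith
    also have "\<dots> \<longleftrightarrow> real m \<le> X" using X power_mono_iff[of "real m" X 2] by simp
    also have "\<dots> \<longleftrightarrow> m \<le> nat \<lfloor>X\<rfloor>" using X by (simp add: le_nat_iff le_floor_iff)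
    finally show ?thesis .
  qed
  show ?thesis unfolding X_def[symmetric]
    by (rule set_eqI) (simp only: mem_Collect_eq atLeastAtMost_iff eqv)
qed

lemma rowc_eq: assumes c: "0 \<le> c" and n: "real n \<le> c"
  shows "rowc c n = nat \<lfloor>sqrt (c^2 - real n ^ 2)\<rfloor>"
  unfolding rowc_def rowc_set[OF c n] by simp

lemma rowc_bounds:
  assumes c: "0 \<le> c" and n: "real n \<le> c"
  shows "real (rowc c n) \<le> sqrt (c^2 - real n ^ 2)" "sqrt (c^2 - real n ^ 2) - 1 < real (rowc c n)"
proof -
  define X where "X = sqrt (c^2 - real n ^ 2)"
  have "real n ^ 2 \<le> c^2" using c n by (intro power_mono) auto
  hence P: "0 \<le> X" unfolding X_def by simp
  have fl: "0 \<le> \<lfloor>X\<rfloor>" using P by simp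
  have e: "real (rowc c n) = real_of_int \<lfloor>X\<rfloor>"
    unfolding rowc_eq[OF c n] X_def[symmetric] using fl by simp
  show "real (rowc c n) \<le> sqrt (c^2 - real n ^ 2)" unfolding e X_def[symmetric] by (rule of_int_floor_le)
  show "sqrt (c^2 - real n ^ 2) - 1 < real (rowc c n)" unfolding e X_def[symmetric] by linarith
qed

definition Qset :: "real \<Rightarrow> (nat \<times> nat) set" where
  "Qset c = {(m,n). 1 \<le> m \<and> 1 \<le> n \<and> real m ^ 2 + real n ^ 2 \<le> c ^ 2}"

lemma Qset_sigma:
  assumes c: "0 \<le> c"
  shows "Qset c = (\<lambda>(n,m). (m,n)) ` (SIGMA n:{1..nat \<lfloor>c\<rfloor>}. {m. 1 \<le> m \<and> real m ^ 2 + real n ^ 2 \<le> c ^ 2})"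
proof -
  have "real n \<le> c" if "1 \<le> m" "real m ^ 2 + real n ^ 2 \<le> c ^ 2" for m n :: nat
  proof -
    have "0 \<le> real m ^ 2" by simp
    hence "real n ^ 2 \<le> c^2" using that(2) by linarith
    thus ?thesis using c by (simp add: power_mono_iff abs_le_square_iff)
  qed
  hence "n \<le> nat \<lfloor>c\<rfloor>" if "1 \<le> m" "real m ^ 2 + real n ^ 2 \<le> c ^ 2" for m n :: nat
    using that by (simp add: le_nat_floor le_floor_iff)
  thus ?thesis unfolding Qset_def by (auto simp: image_iff)
qed

lemma card_Qset:
  assumes c: "0 \<le> c"
  shows "card (Qset c) = (\<Sum>n\<in>{1..nat \<lfloor>c\<rfloor>}. rowc c n)"
proof -
  have fin: "finite {m::nat. 1 \<le> m \<and> real m ^ 2 + real n ^ 2 \<le> c ^ 2}" for n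
  proof -
    have "{m::nat. 1 \<le> m \<and> real m ^ 2 + real n ^ 2 \<le> c ^ 2} \<subseteq> {..nat \<lceil>c^2\<rceil>}"
    proof
      fix m assume "m \<in> {m::nat. 1 \<le> m \<and> real m ^ 2 + real n ^ 2 \<le> c ^ 2}"
      hence h: "real m ^ 2 + real n ^ 2 \<le> c ^ 2" by simp
      have "0 \<le> real n ^ 2" by simp
      hence h2: "real m ^ 2 \<le> c^2" using h by linarith
      have "m \<le> m * m" by (rule le_square)
      hence "real m \<le> real m ^ 2" by (simp add: power2_eq_square flip: of_nat_mult)
      hence "real m \<le> c^2" using h2 by linarith
      hence "real m \<le> real_of_int \<lceil>c^2\<rceil>" by linarith
      thus "m \<in> {..nat \<lceil>c^2\<rceil>}" by simp
    qed
    thus ?thesis using finite_subset by blast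
  qed
  have inj: "inj_on (\<lambda>(n,m). (m,n)) X" for X :: "(nat \<times> nat) set" by (auto simp: inj_on_def)
  show ?thesis
    unfolding Qset_sigma[OF c] card_image[OF inj] rowc_def
    by (rule card_SigmaI) (use fin in auto)
qed

lemma Qset_mono: "R \<le> t \<Longrightarrow> 0 \<le> R \<Longrightarrow> Qset R \<subseteq> Qset t"
  unfolding Qset_def by (auto intro: order_trans power_mono)

lemma Qset_finite: "0 \<le> c \<Longrightarrow> finite (Qset c)"
proof -
  assume c: "0 \<le> c"
  have "finite ((\<lambda>(n,m). (m,n)) ` (SIGMA n:{1..nat \<lfloor>c\<rfloor>}. {m. 1 \<le> m \<and> real m ^ 2 + real n ^ 2 \<le> c ^ 2}))"
  proof (intro finite_imageI finite_SigmaI)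
    fix n
    have "{m::nat. 1 \<le> m \<and> real m ^ 2 + real n ^ 2 \<le> c ^ 2} \<subseteq> {..nat \<lceil>c^2\<rceil>}"
    proof
      fix m assume "m \<in> {m::nat. 1 \<le> m \<and> real m ^ 2 + real n ^ 2 \<le> c ^ 2}"
      hence h: "real m ^ 2 + real n ^ 2 \<le> c ^ 2" by simp
      have "0 \<le> real n ^ 2" by simp
      hence h2: "real m ^ 2 \<le> c^2" using h by linarith
      have "m \<le> m * m" by (rule le_square)
      hence "real m \<le> real m ^ 2" by (simp add: power2_eq_square flip: of_nat_mult)
      hence "real m \<le> c^2" using h2 by linarith
      hence "real m \<le> real_of_int \<lceil>c^2\<rceil>" by linarith
      thus "m \<in> {..nat \<lceil>c^2\<rceil>}" by simp
    qed
    thus "finite {m::nat. 1 \<le> m \<and> real m ^ 2 + real n ^ 2 \<le> c ^ 2}" using finite_subset by blast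
  qed auto
  thus ?thesis using Qset_sigma[OF c] by simp
qed


lemma int_sum_unit:
  fixes f :: "real \<Rightarrow> real"
  assumes cont: "continuous_on UNIV f"
  shows "(\<Sum>n\<in>{1..k}. integral {real n..real n + 1} f) = integral {1..real k + 1} f"
proof (induction k)
  case 0
  show ?case by simp
next
  case (Suc k)
  have i: "f integrable_on {1..real k + 2}"
    by (rule integrable_continuous_interval) (rule continuous_on_subset[OF cont], simp)
  have "(\<Sum>n\<in>{1..Suc k}. integral {real n..real n + 1} f)
      = integral {1..real k + 1} f + integral {real k + 1..real k + 2} f"
    using Suc by (simp add: add.commute)
  also have "\<dots> = integral {1..real k + 2} f"
    by (rule Henstock_Kurzweil_Integration.integral_combine) (use i in auto)
  finally show ?case by (simp add: add.commute)
qed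

lemma int_sum_unit0:
  fixes f :: "real \<Rightarrow> real"
  assumes cont: "continuous_on UNIV f"
  shows "(\<Sum>n\<in>{1..k}. integral {real n - 1..real n} f) = integral {0..real k} f"
proof (induction k)
  case 0
  show ?case by simp
next
  case (Suc k)
  have i: "f integrable_on {0..real k + 1}"
    by (rule integrable_continuous_interval) (rule continuous_on_subset[OF cont], simp)
  have "(\<Sum>n\<in>{1..Suc k}. integral {real n - 1..real n} f)
      = integral {0..real k} f + integral {real k..real k + 1} f"
    using Suc by (simp add: add.commute)
  also have "\<dots> = integral {0..real k + 1} f"
    by (rule Henstock_Kurzweil_Integration.integral_combine) (use i in auto)
  finally show ?case by (simp add: add.commute)
qed

definition psi :: "real \<Rightarrow> real \<Rightarrow> real" where
  "psi t y = max 0 (sqrt (t^2 - y^2) - 1)"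

lemma psi_cont: "continuous_on UNIV (psi t)"
  unfolding psi_def by (intro continuous_intros)

lemma Qset_lower:
  assumes t: "2 \<le> t^2" "0 < t"
  shows "A1 t \<le> real (card (Qset t))"
proof -
  define N where "N = nat \<lfloor>t\<rfloor>"
  define \<sigma> where "\<sigma> = sqrt (t^2 - 1)"
  have t1: "1 \<le> t" using power2_le_imp_le[of 1 t] t by simp
  have s1: "1 \<le> \<sigma>" using t by (simp add: \<sigma>_def)
  have st: "\<sigma> \<le> t" using t by (simp add: \<sigma>_def real_le_lsqrt real_sqrt_le_iff)
  have "real N = real_of_int \<lfloor>t\<rfloor>" using t1 by (simp add: N_def)
  hence tN: "t < real N + 1" by linarith
  have sN: "\<sigma> \<le> real N + 1" using st tN by simp
  have row: "integral {real n..real n + 1} (psi t) \<le> real (rowc t n)" if n: "n \<in> {1..N}" for n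
  proof -
    have nt: "real n \<le> t" using n t1 by (simp add: N_def le_nat_iff le_floor_iff)
    have "integral {real n..real n + 1} (psi t) \<le> integral {real n..real n + 1} (\<lambda>y. real (rowc t n))"
    proof (rule integral_le)
      show "psi t integrable_on {real n..real n + 1}"
        by (rule integrable_continuous_interval) (rule continuous_on_subset[OF psi_cont], simp)
      show "(\<lambda>y. real (rowc t n)) integrable_on {real n..real n + 1}"
        by (rule integrable_continuous_interval) (rule continuous_intros)
    next
      fix y assume y: "y \<in> {real n..real n + 1}"
      have "real n ^ 2 \<le> y^2" using y by (intro power_mono) auto
      hence "sqrt (t^2 - y^2) \<le> sqrt (t^2 - real n ^ 2)" by simp
      hence "sqrt (t^2 - y^2) - 1 \<le> real (rowc t n)" using rowc_bounds(2)[of t n] nt t by linarith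
      thus "psi t y \<le> real (rowc t n)" unfolding psi_def by simp
    qed
    thus ?thesis by simp
  qed
  have "A1 t = integral {1..\<sigma>} (psi t)"
  proof -
    have "((\<lambda>y. sqrt (t^2 - y^2) - 1) has_integral A1 t) {1..\<sigma>}"
      using int_A1[OF t] by (simp add: \<sigma>_def)
    hence "(psi t has_integral A1 t) {1..\<sigma>}"
    proof (rule has_integral_eq[rotated])
      fix y assume y: "y \<in> {1..\<sigma>}"
      have "y^2 \<le> \<sigma>^2" using y s1 by (intro power_mono) auto
      hence "1 \<le> t^2 - y^2" using t by (simp add: \<sigma>_def)
      hence "1 \<le> sqrt (t^2 - y^2)" by simp
      thus "sqrt (t^2 - y^2) - 1 = psi t y" unfolding psi_def by simp
    qed
    thus ?thesis by (simp add: integral_unique)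
  qed
  also have "\<dots> \<le> integral {1..\<sigma>} (psi t) + integral {\<sigma>..real N + 1} (psi t)"
  proof -
    have "0 \<le> integral {\<sigma>..real N + 1} (psi t)"
      by (rule integral_nonneg) (auto intro: integrable_continuous_interval
          continuous_on_subset[OF psi_cont] simp: psi_def)
    thus ?thesis by simp
  qed
  also have "\<dots> = integral {1..real N + 1} (psi t)"
    by (rule Henstock_Kurzweil_Integration.integral_combine) (use s1 sN in \<open>auto intro: integrable_continuous_interval
        continuous_on_subset[OF psi_cont]\<close>)
  also have "\<dots> = (\<Sum>n\<in>{1..N}. integral {real n..real n + 1} (psi t))"
    by (rule int_sum_unit[OF psi_cont, symmetric])
  also have "\<dots> \<le> (\<Sum>n\<in>{1..N}. real (rowc t n))" by (rule sum_mono) (rule row)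
  also have "\<dots> = real (card (Qset t))" using t by (simp add: card_Qset N_def)
  finally show ?thesis .
qed

lemma sqrt_concave:
  assumes l: "0 \<le> l" "l \<le> 1" and PQ: "0 \<le> P" "0 \<le> Q"
  shows "l * sqrt P + (1 - l) * sqrt Q \<le> sqrt (l * P + (1 - l) * Q)"
proof (rule real_le_rsqrt)
  define p q where "p = sqrt P" and "q = sqrt Q"
  have pp: "p^2 = P" "q^2 = Q" using PQ by (simp_all add: p_def q_def)
  have "0 \<le> l * (1 - l) * (p - q)^2" using l by simp
  hence "(l * p + (1 - l) * q)^2 \<le> l * p^2 + (1 - l) * q^2"
    by (simp add: power2_eq_square algebra_simps)
  thus "(l * sqrt P + (1 - l) * sqrt Q)^2 \<le> l * P + (1 - l) * Q"
    using pp by (simp add: p_def q_def)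
qed

lemma sq_convex:
  fixes l a b :: real
  assumes l: "0 \<le> l" "l \<le> 1"
  shows "(l * a + (1 - l) * b)^2 \<le> l * a^2 + (1 - l) * b^2"
proof -
  have "0 \<le> l * (1 - l) * (a - b)^2" using l by simp
  thus ?thesis by (simp add: power2_eq_square algebra_simps)
qed

lemma chord_below:
  fixes R a y :: real
  assumes a: "0 \<le> a" "a + 1 \<le> R" and y: "a \<le> y" "y \<le> a + 1"
  shows "sqrt (R^2 - a^2) + (sqrt (R^2 - (a+1)^2) - sqrt (R^2 - a^2)) * (y - a) \<le> sqrt (R^2 - y^2)"
proof -
  define l where "l = a + 1 - y"
  have l: "0 \<le> l" "l \<le> 1" using y by (auto simp: l_def)
  have R0: "0 \<le> R" using a by simp
  have P: "0 \<le> R^2 - a^2" using a by (simp add: power_mono)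
  have Q: "0 \<le> R^2 - (a+1)^2" using a by (simp add: power_mono)
  have yl: "y = l * a + (1 - l) * (a + 1)" by (simp add: l_def algebra_simps)
  have "sqrt (R^2 - a^2) + (sqrt (R^2 - (a+1)^2) - sqrt (R^2 - a^2)) * (y - a)
      = l * sqrt (R^2 - a^2) + (1 - l) * sqrt (R^2 - (a+1)^2)"
    by (simp add: l_def algebra_simps)
  also have "\<dots> \<le> sqrt (l * (R^2 - a^2) + (1 - l) * (R^2 - (a+1)^2))"
    by (rule sqrt_concave[OF l P Q])
  also have "\<dots> \<le> sqrt (R^2 - y^2)"
  proof -
    have "y^2 \<le> l * a^2 + (1 - l) * (a+1)^2" unfolding yl by (rule sq_convex[OF l])
    hence "l * (R^2 - a^2) + (1 - l) * (R^2 - (a+1)^2) \<le> R^2 - y^2" by (simp add: algebra_simps)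
    thus ?thesis by simp
  qed
  finally show ?thesis .
qed

definition fR :: "real \<Rightarrow> real \<Rightarrow> real" where "fR R y = sqrt (R^2 - y^2)"

lemma fR_cont: "continuous_on UNIV (fR R)"
  unfolding fR_def by (intro continuous_intros)

lemma trapezoid:
  assumes a: "0 \<le> a" "a + 1 \<le> R"
  shows "(fR R a + fR R (a + 1)) / 2 \<le> integral {a..a+1} (fR R)"
proof -
  define L where "L y = fR R a + (fR R (a+1) - fR R a) * (y - a)" for y
  define G where "G y = fR R a * y + (fR R (a+1) - fR R a) * (y - a)^2 / 2" for y
  define fa fb where "fa = fR R a" and "fb = fR R (a + 1)"
  have h1: "((\<lambda>y. y) has_integral ((a+1)^2 - a^2)/2) {a..a+1}" by (rule ident_has_integral) simp
  have h2: "((\<lambda>y. (fb - fa) * y) has_integral (fb - fa) * (((a+1)^2 - a^2)/2)) {a..a+1}"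
    by (rule has_integral_mult_right[OF h1])
  have h3: "((\<lambda>y. fa - (fb - fa) * a) has_integral (fa - (fb - fa) * a)) {a..a+1}"
    using has_integral_const_real[of "fa - (fb - fa) * a" a "a+1"] by simp
  have h4: "((\<lambda>y. (fa - (fb - fa) * a) + (fb - fa) * y) has_integral
      (fa - (fb - fa) * a) + (fb - fa) * (((a+1)^2 - a^2)/2)) {a..a+1}"
    by (rule has_integral_add[OF h3 h2])
  have v: "(fa - (fb - fa) * a) + (fb - fa) * (((a+1)^2 - a^2)/2) = (fa + fb) / 2"
  proof -
    have e: "(a+1)^2 - a^2 = 2*a+1" by (simp add: power2_eq_square algebra_simps)
    show ?thesis unfolding e by (simp add: field_simps)
  qed
  have hL: "(L has_integral (fR R a + fR R (a + 1)) / 2) {a..a+1}"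
  proof (rule has_integral_eq[rotated])
    show "((\<lambda>y. (fa - (fb - fa) * a) + (fb - fa) * y) has_integral (fR R a + fR R (a + 1)) / 2) {a..a+1}"
      using h4[unfolded v] by (simp only: fa_def fb_def)
    fix y show "(fa - (fb - fa) * a) + (fb - fa) * y = L y"
      by (simp add: L_def fa_def fb_def algebra_simps)
  qed
  have "integral {a..a+1} L \<le> integral {a..a+1} (fR R)"
  proof (rule integral_le)
    show "L integrable_on {a..a+1}" using hL by blast
    show "fR R integrable_on {a..a+1}"
      by (rule integrable_continuous_interval) (rule continuous_on_subset[OF fR_cont], simp)
  next
    fix y assume "y \<in> {a..a+1}"
    thus "L y \<le> fR R y" unfolding L_def fR_def using chord_below[OF a, of y] by simp
  qed
  thus ?thesis using hL by (simp add: integral_unique)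
qed

lemma sum_fR_bound:
  assumes k: "real k \<le> R"
  shows "(\<Sum>n\<in>{1..k}. fR R (real n)) \<le> integral {0..real k} (fR R) - (R - fR R (real k)) / 2"
  using k
proof (induction k)
  case 0
  have "0 \<le> R" using 0 by simp
  thus ?case by (simp add: fR_def)
next
  case (Suc k)
  have k: "real k \<le> R" using Suc.prems by simp
  have tr: "(fR R (real k) + fR R (real k + 1)) / 2 \<le> integral {real k..real k + 1} (fR R)"
    by (rule trapezoid) (use Suc.prems in auto)
  have comb: "integral {0..real k} (fR R) + integral {real k..real k + 1} (fR R) = integral {0..real k + 1} (fR R)"
    by (rule Henstock_Kurzweil_Integration.integral_combine) (auto intro: integrable_continuous_interval continuous_on_subset[OF fR_cont])
  have "(\<Sum>n\<in>{1..Suc k}. fR R (real n)) = (\<Sum>n\<in>{1..k}. fR R (real n)) + fR R (real k + 1)"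
    by (simp add: add.commute)
  also have "\<dots> \<le> integral {0..real k} (fR R) - (R - fR R (real k)) / 2 + fR R (real k + 1)"
    using Suc.IH[OF k] by simp
  also have "\<dots> \<le> integral {0..real k + 1} (fR R) - (R - fR R (real k + 1)) / 2"
    using tr comb by argo
  finally show ?case by (simp add: add.commute)
qed

lemma Qset_upper:
  assumes R: "1 \<le> R"
  shows "real (card (Qset R)) \<le> pi / 4 * R^2 - R / 2 + sqrt (R^2 - (real (nat \<lfloor>R\<rfloor>))^2) / 2"
proof -
  define M where "M = nat \<lfloor>R\<rfloor>"
  have MR: "real M \<le> R" using R by (simp add: M_def)
  have "real (card (Qset R)) = (\<Sum>n\<in>{1..M}. real (rowc R n))" using R by (simp add: card_Qset M_def)
  also have "\<dots> \<le> (\<Sum>n\<in>{1..M}. fR R (real n))"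
  proof (rule sum_mono)
    fix n assume n: "n \<in> {1..M}"
    have "real n \<le> R" using n MR by simp
    thus "real (rowc R n) \<le> fR R (real n)" using rowc_bounds(1)[of R n] R by (simp add: fR_def)
  qed
  also have "\<dots> \<le> integral {0..real M} (fR R) - (R - fR R (real M)) / 2" by (rule sum_fR_bound[OF MR])
  also have "integral {0..real M} (fR R) \<le> pi / 4 * R^2"
  proof -
    have "0 \<le> integral {real M..R} (fR R)"
      by (rule integral_nonneg) (auto intro: integrable_continuous_interval
          continuous_on_subset[OF fR_cont] simp: fR_def)
    hence "integral {0..real M} (fR R) \<le> integral {0..real M} (fR R) + integral {real M..R} (fR R)"
      by simp
    also have "\<dots> = integral {0..R} (fR R)"
      by (rule Henstock_Kurzweil_Integration.integral_combine) (use MR in \<open>auto intro: integrable_continuous_interval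
          continuous_on_subset[OF fR_cont]\<close>)
    also have "\<dots> = pi / 4 * R^2"
    proof -
      have "(fR R has_integral pi / 4 * R^2) {0..R}" using int_quarter[of R] R unfolding fR_def by simp
      thus ?thesis by (rule integral_unique)
    qed
    finally show ?thesis .
  qed
  finally have X: "real (card (Qset R)) \<le> pi / 4 * R^2 - (R - fR R (real M)) / 2" by simp
  thus ?thesis unfolding fR_def M_def by argo
qed


lemma arcsin_ge_self: assumes "0 \<le> x" "x \<le> 1" shows "x \<le> arcsin x"
proof -
  have "0 \<le> arcsin x" using assms by (simp add: arcsin_nonneg)
  hence "sin (arcsin x) \<le> arcsin x" by (rule sin_x_le_x)
  thus ?thesis using assms by simp
qed

lemma arcsin_inv_le:
  assumes t: "1 < t"
  shows "arcsin (1 / t) \<le> 1 / sqrt (t^2 - 1)"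
proof -
  have x: "-1 < 1/t" "1/t < 1" using t by (auto simp: field_simps)
  have q: "sqrt (1 - (1/t)^2) = sqrt (t^2 - 1) / t"
  proof -
    have "1 - (1/t)^2 = (t^2 - 1) / t^2" using t by (simp add: field_simps)
    thus ?thesis using t by (simp add: real_sqrt_divide)
  qed
  have st: "0 < sqrt (t^2 - 1)" using t by (simp add: power_strict_mono abs_if)
  have "arcsin (1/t) = arctan ((1/t) / sqrt (1 - (1/t)^2))" by (rule arcsin_arctan[OF x])
  also have "(1/t) / sqrt (1 - (1/t)^2) = 1 / sqrt (t^2 - 1)" unfolding q using t st by (simp add: field_simps)
  also have "arctan (1 / sqrt (t^2 - 1)) \<le> 1 / sqrt (t^2 - 1)" by (rule arctan_le_self) (use st in simp)
  finally show ?thesis .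
qed

lemma pi_sqrt2: "(444286/100000) \<le> pi * sqrt 2" "(314159/100000) \<le> pi" "(141421/100000) \<le> sqrt 2" "sqrt 2 \<le> (141422/100000)"
proof -
  show p: "(314159/100000) \<le> pi" using pi_approx(1) by simp
  show s: "(141421/100000) \<le> sqrt 2" by (rule real_le_rsqrt) (simp add: power2_eq_square)
  show "sqrt 2 \<le> (141422/100000)" by (rule real_le_lsqrt) (simp_all add: power2_eq_square)
  have "(314159/100000) * (141421/100000) \<le> pi * sqrt 2" by (rule mult_mono[OF p s]) auto
  thus "(444286/100000) \<le> pi * sqrt 2" by simp
qed

lemma sig_bounds:
  assumes t: "3 \<le> t"
  shows "sqrt (t^2 - 1) \<le> t - 1 / (2 * t)" "1 / sqrt (t^2 - 1) \<le> 1 / t + 1 / 20"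
    "t^2 * arcsin (1 / t) \<le> sqrt (t^2 - 1) + 1 / sqrt (t^2 - 1)"
proof -
  define \<sigma> where "\<sigma> = sqrt (t^2 - 1)"
  have t0: "0 < t" using t by simp
  have tt: "9 \<le> t^2" using power_mono[OF t, of 2] by simp
  have ss: "\<sigma>^2 = t^2 - 1" using tt by (simp add: \<sigma>_def)
  show s1: "sqrt (t^2 - 1) \<le> t - 1 / (2 * t)"
  proof (rule real_le_lsqrt)
    have "1 / (2 * t) \<le> 1" using t by (simp add: field_simps)
    thus "0 \<le> t - 1 / (2 * t)" using t by linarith
    have "(t - 1 / (2 * t))^2 = t^2 - 1 + 1 / (4 * t^2)" using t0 by (simp add: power2_eq_square field_simps)
    moreover have "0 \<le> 1 / (4 * t^2)" by simp
    ultimately show "t^2 - 1 \<le> (t - 1 / (2 * t))^2" by linarith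
  qed
  have s2: "t - 1 / t \<le> \<sigma>" unfolding \<sigma>_def
  proof (rule real_le_rsqrt)
    have "(t - 1 / t)^2 = t^2 - 2 + 1 / t^2" using t0 by (simp add: power2_eq_square field_simps)
    moreover have "1 / t^2 \<le> 1" using tt by (simp add: divide_le_eq)
    ultimately show "(t - 1 / t)^2 \<le> t^2 - 1" by linarith
  qed
  have it: "1 / t \<le> 1 / 3" using t by (simp add: field_simps)
  have sg: "8 / 3 \<le> \<sigma>" using s2 it t by linarith
  have sp: "0 < \<sigma>" using sg by simp
  have "1 / \<sigma> - 1 / t = (t - \<sigma>) / (\<sigma> * t)" using sp t0 by (simp add: field_simps)
  also have "\<dots> \<le> (1 / t) / (\<sigma> * t)" using s2 sp t0 by (intro divide_right_mono) auto
  also have "\<dots> = 1 / (\<sigma> * t^2)" by (simp add: power2_eq_square field_simps)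
  also have "\<dots> \<le> 1 / (8 / 3 * 9)"
    using sg tt sp by (intro divide_left_mono mult_mono) (auto intro!: mult_pos_pos)
  finally show "1 / sqrt (t^2 - 1) \<le> 1 / t + 1 / 20" unfolding \<sigma>_def[symmetric] by simp
  have "arcsin (1 / t) \<le> 1 / \<sigma>" unfolding \<sigma>_def by (rule arcsin_inv_le) (use t in simp)
  hence "t^2 * arcsin (1 / t) \<le> t^2 * (1 / \<sigma>)" by (rule mult_left_mono) simp
  also have "t^2 * (1 / \<sigma>) = \<sigma> + 1 / \<sigma>" using sp ss by (simp add: field_simps power2_eq_square)
  finally show "t^2 * arcsin (1 / t) \<le> sqrt (t^2 - 1) + 1 / sqrt (t^2 - 1)" by (simp add: \<sigma>_def)
qed

lemma rho_facts:
  assumes R: "2 < R" and t: "R + sqrt 2 \<le> t"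
  shows "3 \<le> t" "(R + sqrt 2)^2 = R^2 + 2 * sqrt 2 * R + 2"
    "0 \<le> t^2 - (R + sqrt 2)^2"
    "2 * t - 2 * (R + sqrt 2) \<le> arcsin (1 / (R + sqrt 2)) * (t^2 - (R + sqrt 2)^2)"
proof -
  define \<rho> where "\<rho> = R + sqrt 2"
  have s2: "(141421/100000) \<le> sqrt 2" "sqrt 2 \<le> (141422/100000)" using pi_sqrt2 by auto
  have r3: "3 \<le> \<rho>" using R s2 by (simp add: \<rho>_def)
  show "3 \<le> t" using r3 t by (simp add: \<rho>_def)
  show rr: "(R + sqrt 2)^2 = R^2 + 2 * sqrt 2 * R + 2" by (simp add: power2_eq_square algebra_simps)
  have D0: "\<rho>^2 \<le> t^2" using t r3 by (intro power_mono) (auto simp: \<rho>_def)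
  thus "0 \<le> t^2 - (R + sqrt 2)^2" by (simp add: \<rho>_def)
  have th: "1 / \<rho> \<le> arcsin (1 / \<rho>)" by (rule arcsin_ge_self) (use r3 in auto)
  have "(t^2 - \<rho>^2) / \<rho> \<le> arcsin (1 / \<rho>) * (t^2 - \<rho>^2)"
    using mult_right_mono[OF th, of "t^2 - \<rho>^2"] D0 by simp
  moreover have "2 * t - 2 * \<rho> \<le> (t^2 - \<rho>^2) / \<rho>"
  proof -
    have "0 \<le> (t - \<rho>)^2" by simp
    hence "2 * \<rho> * t - 2 * \<rho>^2 \<le> t^2 - \<rho>^2" by (simp add: power2_eq_square algebra_simps)
    moreover have "(2 * \<rho> * t - 2 * \<rho>^2) / \<rho> = 2 * t - 2 * \<rho>" using r3 by (simp add: power2_eq_square field_simps)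
    ultimately show ?thesis using divide_right_mono[of "2 * \<rho> * t - 2 * \<rho>^2" "t^2 - \<rho>^2" \<rho>] r3 by simp
  qed
  ultimately show "2 * t - 2 * (R + sqrt 2) \<le> arcsin (1 / (R + sqrt 2)) * (t^2 - (R + sqrt 2)^2)"
    by (simp add: \<rho>_def)
qed

lemma lin2: fixes X S IS IT A P pp R t q pt pr :: real
  assumes "2*t - 2*(R + q) \<le> X" "S \<le> t - IT/2" "IS \<le> IT + 1/20" "A \<le> S + IS"
    "(444286/100000) * R \<le> P" "(314159/100000) \<le> pp" "q \<le> (141422/100000)" "2 < R"
  shows "pt - pr - P/2 - pp/2 - X \<le> pt - A - S + 1 - pr"
  using assms by argo

lemma ineq_N2:
  assumes R: "2 < R" and t: "R + sqrt 2 \<le> t"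
  shows "(pi / 4 - arcsin (1 / (R + sqrt 2))) * (t^2 - (R + sqrt 2)^2) \<le> A1 t - pi / 4 * R^2"
proof -
  note rf = rho_facts[OF R t]
  note sb = sig_bounds[OF rf(1)]
  note ps = pi_sqrt2
  have pR: "(444286/100000) * R \<le> pi * sqrt 2 * R" using ps(1) R by (intro mult_right_mono) auto
  have it: "1 / (2 * t) = (1 / t) / 2" by simp
  have e1: "(pi / 4 - arcsin (1 / (R + sqrt 2))) * (t^2 - (R + sqrt 2)^2)
      = pi / 4 * t^2 - pi / 4 * R^2 - (pi * sqrt 2 * R) / 2 - pi / 2
        - arcsin (1 / (R + sqrt 2)) * (t^2 - (R + sqrt 2)^2)"
    unfolding rf(2) by (simp add: algebra_simps)
  show ?thesis unfolding e1 A1_def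
    by (rule lin2[OF rf(4) sb(1)[unfolded it] sb(2) sb(3) pR ps(2) ps(4) R])
qed

lemma rho_facts1:
  assumes R: "2 < R" and t: "R + sqrt 2 \<le> t"
  shows "3 * t - 13 * (R + sqrt 2) / 4 \<le> arcsin (1 / (R + sqrt 2)) * (t^2 - (R + sqrt 2)^2)"
proof -
  define \<rho> where "\<rho> = R + sqrt 2"
  have s2: "(141421/100000) \<le> sqrt 2" using pi_sqrt2 by auto
  have r3: "3 \<le> \<rho>" using R s2 by (simp add: \<rho>_def)
  have D0: "\<rho>^2 \<le> t^2" using t r3 by (intro power_mono) (auto simp: \<rho>_def)
  have th: "1 / \<rho> \<le> arcsin (1 / \<rho>)" by (rule arcsin_ge_self) (use r3 in auto)
  have "(t^2 - \<rho>^2) / \<rho> \<le> arcsin (1 / \<rho>) * (t^2 - \<rho>^2)"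
    using mult_right_mono[OF th, of "t^2 - \<rho>^2"] D0 by simp
  moreover have "3 * t - 13 * \<rho> / 4 \<le> (t^2 - \<rho>^2) / \<rho>"
  proof -
    have "0 \<le> (t - 3 * \<rho> / 2)^2" by simp
    hence "3 * \<rho> * t - 13 * \<rho>^2 / 4 \<le> t^2 - \<rho>^2" by (simp add: power2_eq_square algebra_simps)
    moreover have "(3 * \<rho> * t - 13 * \<rho>^2 / 4) / \<rho> = 3 * t - 13 * \<rho> / 4" using r3
      by (simp add: power2_eq_square field_simps)
    ultimately show ?thesis using divide_right_mono[of "3 * \<rho> * t - 13 * \<rho>^2 / 4" "t^2 - \<rho>^2" \<rho>] r3
      by simp
  qed
  ultimately show ?thesis by (simp add: \<rho>_def)
qed

lemma sqrt_lin:
  assumes R: "2 \<le> R"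
  shows "sqrt (2 * R - 1) \<le> (119286/100000) * R - 55470/100000"
proof (rule real_le_lsqrt)
  show "0 \<le> (119286/100000) * R - 55470/100000" using R by simp
  define d where "d = R - 2"
  have d: "0 \<le> d" using R by (simp add: d_def)
  have Rd: "R = d + 2" by (simp add: d_def)
  have "((119286/100000) * R - 55470/100000)^2 - (2 * R - 1)
      = (119286/100000)^2 * d^2 + ((4 * (119286/100000)^2 - 2 * (119286/100000) * (55470/100000) - 2) * d
        + (4 * (119286/100000)^2 - 4 * (119286/100000) * (55470/100000) + (55470/100000)^2 - 3))"
    unfolding Rd by (simp add: power2_eq_square algebra_simps)
  also have "\<dots> \<ge> 0" using d by (intro add_nonneg_nonneg mult_nonneg_nonneg) (simp_all add: power2_eq_square)
  finally show "2 * R - 1 \<le> ((119286/100000) * R - 55470/100000)^2" by simp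
qed

lemma floor_gain:
  assumes R: "1 \<le> R"
  shows "- sqrt (2 * R - 1) \<le> R - real (nat \<lfloor>R\<rfloor>) - sqrt (R^2 - (real (nat \<lfloor>R\<rfloor>))^2)"
proof -
  define M where "M = real (nat \<lfloor>R\<rfloor>)"
  have M: "M = real_of_int \<lfloor>R\<rfloor>" using R by (simp add: M_def)
  have p0: "0 \<le> R - M" "R - M < 1" unfolding M by linarith+
  have M0: "0 \<le> M" by (simp add: M_def)
  have "R^2 - M^2 = (R - M) * (2 * R - (R - M))" by (simp add: power2_eq_square algebra_simps)
  also have "\<dots> \<le> 2 * R - 1"
  proof -
    have "0 \<le> (1 - (R - M)) * (2 * R - 1 - (R - M))" using p0 R by (intro mult_nonneg_nonneg) auto
    thus ?thesis by (simp add: algebra_simps)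
  qed
  finally have "sqrt (R^2 - M^2) \<le> sqrt (2 * R - 1)" by simp
  thus ?thesis using p0 unfolding M_def[symmetric] by linarith
qed

lemma lin1: fixes X S IS IT A P pp R t q pt pr pt2 pr2 M sM sq :: real
  assumes "3 * t - 13 * (R + q) / 4 \<le> X" "S \<le> t - IT/2" "IS \<le> IT + 1/20" "A \<le> S + IS"
    "(444286/100000) * R \<le> P" "(314159/100000) \<le> pp" "q \<le> (141422/100000)"
    "- sq \<le> R - M - sM" "sq \<le> (119286/100000) * R - 55470/100000"
    "pt2 = 2 * pt" "pr2 = 2 * pr"
  shows "pt2 - pr2 - P - pp - X \<le> 2 * (pt - A - S + 1 - (pr - R / 2 + sM / 2)) + (t - 1 - M)"
  using assms by argo

lemma ineq_N1:
  assumes R: "2 < R" and t: "R + sqrt 2 \<le> t"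
  shows "(pi / 2 - arcsin (1 / (R + sqrt 2))) * (t^2 - (R + sqrt 2)^2)
    \<le> 2 * (A1 t - (pi / 4 * R^2 - R / 2 + sqrt (R^2 - (real (nat \<lfloor>R\<rfloor>))^2) / 2))
       + (t - 1 - real (nat \<lfloor>R\<rfloor>))"
proof -
  note rf = rho_facts[OF R t]
  note sb = sig_bounds[OF rf(1)]
  note ps = pi_sqrt2
  have pR: "(444286/100000) * R \<le> pi * sqrt 2 * R" using ps(1) R by (intro mult_right_mono) auto
  have it: "1 / (2 * t) = (1 / t) / 2" by simp
  have e1: "(pi / 2 - arcsin (1 / (R + sqrt 2))) * (t^2 - (R + sqrt 2)^2)
      = pi / 2 * t^2 - pi / 2 * R^2 - pi * sqrt 2 * R - pi
        - arcsin (1 / (R + sqrt 2)) * (t^2 - (R + sqrt 2)^2)"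
    unfolding rf(2) by (simp add: algebra_simps)
  show ?thesis unfolding e1 A1_def
    by (rule lin1[OF rho_facts1[OF R t] sb(1)[unfolded it] sb(2) sb(3) pR ps(2) ps(4)
          floor_gain sqrt_lin]) (use R in auto)
qed


lemma ftc_powr:
  fixes s a b :: real
  assumes s: "0 < s" and ab: "0 < a" "a \<le> b"
  shows "((\<lambda>t. 2 * s * t powr (-2 * s - 1)) has_integral (a powr (-2 * s) - b powr (-2 * s))) {a..b}"
proof -
  define F where "F t = - (t powr (-2 * s))" for t
  have "((\<lambda>t. 2 * s * t powr (-2 * s - 1)) has_integral (F b - F a)) {a..b}"
  proof (rule fundamental_theorem_of_calculus[of a b F])
    show "a \<le> b" by (rule ab(2))
    fix x assume x: "x \<in> {a..b}"
    hence x0: "0 < x" using ab by auto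
    have "(F has_real_derivative - ((-2 * s) * x powr (-2 * s - 1))) (at x)"
      unfolding F_def using DERIV_minus[OF has_real_derivative_powr[OF x0, of "-2 * s"]] by simp
    hence "(F has_real_derivative 2 * s * x powr (-2 * s - 1)) (at x within {a..b})"
      by (simp add: has_field_derivative_at_within)
    thus "(F has_vector_derivative 2 * s * x powr (-2 * s - 1)) (at x within {a..b})"
      by (simp add: has_real_derivative_iff_has_vector_derivative)
  qed
  thus ?thesis by (simp add: F_def)
qed

lemma alg_H: fixes A s rho x y1 y2 :: real
  assumes "y1 = y2 * x^2" "2 - 2 * s \<noteq> 0"
  shows "A * s * ((2 - 2 * s) * y1) / (2 - 2 * s) + A / 2 * rho^2 * ((-2 * s) * y2)
      = 2 * s * y2 * (A / 2 * (x^2 - rho^2))"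
  using assms by (simp add: field_simps)

definition Hc :: "real \<Rightarrow> real \<Rightarrow> real \<Rightarrow> real \<Rightarrow> real" where
  "Hc A s rho t = A * s * t powr (2 - 2 * s) / (2 - 2 * s) + A / 2 * rho^2 * t powr (-2 * s)"

lemma ftc_H:
  assumes s: "1 < s" and ab: "0 < a" "a \<le> b"
  shows "((\<lambda>t. 2 * s * t powr (-2 * s - 1) * (A / 2 * (t^2 - rho^2))) has_integral
      (Hc A s rho b - Hc A s rho a)) {a..b}"
proof (rule fundamental_theorem_of_calculus[OF ab(2)])
  fix x assume x: "x \<in> {a..b}"
  hence x0: "0 < x" using ab by auto
  have "2 - 2 * s < 0" using s by simp
  hence s2: "2 - 2 * s \<noteq> 0" by simp
  have d1: "((\<lambda>t. t powr (2 - 2 * s)) has_real_derivative (2 - 2 * s) * x powr (1 - 2 * s)) (at x)"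
    using has_real_derivative_powr[OF x0, of "2 - 2 * s"] by (simp add: algebra_simps)
  have d2: "((\<lambda>t. t powr (-2 * s)) has_real_derivative (-2 * s) * x powr (-2 * s - 1)) (at x)"
    using has_real_derivative_powr[OF x0, of "-2 * s"] by simp
  have d: "(Hc A s rho has_real_derivative
      A * s * ((2 - 2 * s) * x powr (1 - 2 * s)) / (2 - 2 * s) + A / 2 * rho^2 * ((-2 * s) * x powr (-2 * s - 1))) (at x)"
    unfolding Hc_def by (intro DERIV_add DERIV_cdivide DERIV_cmult d1 d2)
  have pw: "x powr (-2 * s - 1) * x^2 = x powr (1 - 2 * s)"
  proof -
    have "x powr (-2 * s - 1) * x^2 = x powr (-2 * s - 1) * x powr 2" using x0 by (simp add: powr_realpow)
    also have "\<dots> = x powr (1 - 2 * s)" by (simp add: powr_add[symmetric])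
    finally show ?thesis .
  qed
  have "A * s * ((2 - 2 * s) * x powr (1 - 2 * s)) / (2 - 2 * s) + A / 2 * rho^2 * ((-2 * s) * x powr (-2 * s - 1))
      = 2 * s * x powr (-2 * s - 1) * (A / 2 * (x^2 - rho^2))"
    by (rule alg_H[OF pw[symmetric] s2])
  with d have "(Hc A s rho has_real_derivative 2 * s * x powr (-2 * s - 1) * (A / 2 * (x^2 - rho^2))) (at x)"
    by simp
  thus "(Hc A s rho has_vector_derivative 2 * s * x powr (-2 * s - 1) * (A / 2 * (x^2 - rho^2))) (at x within {a..b})"
    by (simp add: has_real_derivative_iff_has_vector_derivative[symmetric] has_field_derivative_at_within)
qed

lemma Hc_lim:
  assumes s: "1 < s"
  shows "((\<lambda>T. Hc A s rho T) \<longlongrightarrow> 0) at_top"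
proof -
  have l1: "((\<lambda>T. T powr (2 - 2 * s)) \<longlongrightarrow> 0) at_top"
    by (rule tendsto_neg_powr) (use s in \<open>auto intro: filterlim_ident\<close>)
  have l2: "((\<lambda>T. T powr (-2 * s)) \<longlongrightarrow> 0) at_top"
    by (rule tendsto_neg_powr) (use s in \<open>auto intro: filterlim_ident\<close>)
  have "((\<lambda>T. A * s * T powr (2 - 2 * s) / (2 - 2 * s) + A / 2 * rho^2 * T powr (-2 * s)) \<longlongrightarrow>
      A * s * 0 / (2 - 2 * s) + A / 2 * rho^2 * 0) at_top"
  proof -
    have "2 - 2 * s < 0" using s by simp
    hence s2: "2 - 2 * s \<noteq> 0" by simp
    show ?thesis by (intro tendsto_intros l1 l2) (use s2 in auto)
  qed
  thus ?thesis unfolding Hc_def by simp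
qed

lemma alg_Hr: fixes A s p :: real
  assumes "2 * s - 2 \<noteq> 0" "2 - 2 * s \<noteq> 0"
  shows "- (A * s * p / (2 - 2 * s) + A / 2 * p) = A * (1 / (2 * s - 2)) * p"
proof -
  have e: "2 - 2 * s = - (2 * s - 2)" by simp
  show ?thesis unfolding e using assms(1) by (simp add: field_simps)
qed

lemma Hc_rho:
  assumes s: "1 < s" and r: "0 < rho"
  shows "- Hc A s rho rho = A * (1 / (2 * s - 2)) * (1 / rho) powr (2 * s - 2)"
proof -
  have a: "rho^2 * rho powr (-2 * s) = rho powr (2 - 2 * s)"
  proof -
    have "rho^2 * rho powr (-2 * s) = rho powr 2 * rho powr (-2 * s)" using r by (simp add: powr_realpow)
    also have "\<dots> = rho powr (2 - 2 * s)" by (simp add: powr_add[symmetric])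
    finally show ?thesis .
  qed
  have b: "(1 / rho) powr (2 * s - 2) = rho powr (2 - 2 * s)"
    using r by (simp add: powr_divide powr_minus_divide[symmetric])
  have s2: "2 * s - 2 \<noteq> 0" "2 - 2 * s \<noteq> 0" "s \<noteq> 1" using s by auto
  have h: "Hc A s rho rho = A * s * rho powr (2 - 2 * s) / (2 - 2 * s) + A / 2 * rho powr (2 - 2 * s)"
    unfolding Hc_def a[symmetric] by (simp add: mult.assoc)
  show ?thesis unfolding h b by (rule alg_Hr[OF s2(1,2)])
qed

lemma layer_cake:
  fixes J :: "complex set" and rho A s :: real
  assumes s: "1 < s" and rho: "0 < rho" and A: "0 \<le> A"
    and summ: "(\<lambda>b. 1 / cmod b powr (2 * s)) summable_on J"
    and pos: "\<And>b. b \<in> J \<Longrightarrow> 0 < cmod b"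
    and fin: "\<And>t. finite {b\<in>J. cmod b \<le> t}"
    and cnt: "\<And>t. rho \<le> t \<Longrightarrow> A / 2 * (t^2 - rho^2) \<le> real (card {b\<in>J. cmod b \<le> t})"
  shows "A * (1 / (2 * s - 2)) * (1 / rho) powr (2 * s - 2) \<le> (\<Sum>\<^sub>\<infinity>b\<in>J. 1 / cmod b powr (2 * s))"
proof -
  define w where "w t = 2 * s * t powr (-2 * s - 1)" for t
  have key: "Hc A s rho T - Hc A s rho rho \<le> (\<Sum>\<^sub>\<infinity>b\<in>J. 1 / cmod b powr (2 * s))" if T: "rho \<le> T" for T
  proof -
    define F where "F = {b\<in>J. cmod b \<le> T}"
    have Ffin: "finite F" using fin by (simp add: F_def)
    define rb where "rb b = max (cmod b) rho" for b
    have ib: "((\<lambda>t. if rb b \<le> t then w t else 0) has_integral (rb b powr (-2 * s) - T powr (-2 * s))) {rho..T}"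
      if b: "b \<in> F" for b
    proof -
      have rbT: "rho \<le> rb b" "rb b \<le> T" using b T by (auto simp: rb_def F_def)
      have "(w has_integral (rb b powr (-2 * s) - T powr (-2 * s))) {rb b..T}"
        unfolding w_def by (rule ftc_powr) (use s rho rbT in auto)
      hence h: "((\<lambda>x. if x \<in> cbox (rb b) T then w x else 0) has_integral (rb b powr (-2 * s) - T powr (-2 * s)))
          (cbox rho T)"
        by (intro has_integral_restrict_closed_subinterval) (use rbT in auto)
      show ?thesis
      proof (rule has_integral_eq[rotated])
        show "((\<lambda>x. if x \<in> cbox (rb b) T then w x else 0) has_integral (rb b powr (-2 * s) - T powr (-2 * s)))
          {rho..T}" using h by simp
        fix x assume "x \<in> {rho..T}"
        thus "(if x \<in> cbox (rb b) T then w x else 0) = (if rb b \<le> x then w x else 0)" by auto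
      qed
    qed
    have sumint: "((\<lambda>t. \<Sum>b\<in>F. (if rb b \<le> t then w t else 0)) has_integral
        (\<Sum>b\<in>F. (rb b powr (-2 * s) - T powr (-2 * s)))) {rho..T}"
      by (rule has_integral_sum[OF Ffin ib])
    have gint: "((\<lambda>t. w t * (A / 2 * (t^2 - rho^2))) has_integral (Hc A s rho T - Hc A s rho rho)) {rho..T}"
      using ftc_H[OF s rho T, of A rho] by (simp add: w_def)
    have le1: "Hc A s rho T - Hc A s rho rho \<le> (\<Sum>b\<in>F. (rb b powr (-2 * s) - T powr (-2 * s)))"
    proof (rule has_integral_le[OF gint sumint])
      fix t assume t: "t \<in> {rho..T}"
      have "(\<Sum>b\<in>F. (if rb b \<le> t then w t else 0)) = (\<Sum>b\<in>{b\<in>F. rb b \<le> t}. w t)"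
        by (rule sum.inter_filter[OF Ffin, symmetric])
      also have "\<dots> = w t * real (card {b\<in>F. rb b \<le> t})" by simp
      also have "{b\<in>F. rb b \<le> t} = {b\<in>J. cmod b \<le> t}" using t by (auto simp: F_def rb_def)
      finally have e: "(\<Sum>b\<in>F. (if rb b \<le> t then w t else 0)) = w t * real (card {b\<in>J. cmod b \<le> t})" .
      have w0: "0 \<le> w t" using s by (simp add: w_def)
      show "w t * (A / 2 * (t^2 - rho^2)) \<le> (\<Sum>b\<in>F. (if rb b \<le> t then w t else 0))"
        unfolding e using cnt[of t] t w0 by (intro mult_left_mono) auto
    qed
    also have "\<dots> \<le> (\<Sum>b\<in>F. 1 / cmod b powr (2 * s))"
    proof (rule sum_mono)
      fix b assume b: "b \<in> F"
      have cb: "0 < cmod b" using b pos by (auto simp: F_def)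
      have "rb b powr (-2 * s) \<le> cmod b powr (-2 * s)"
        by (rule powr_mono2') (use s cb in \<open>auto simp: rb_def\<close>)
      moreover have "0 \<le> T powr (-2 * s)" by simp
      moreover have e: "1 / cmod b powr (2 * s) = cmod b powr (-2 * s)"
        using powr_minus_divide[of "cmod b" "2 * s"] by simp
      ultimately show "rb b powr (-2 * s) - T powr (-2 * s) \<le> 1 / cmod b powr (2 * s)"
        unfolding e by linarith
    qed
    also have "\<dots> \<le> (\<Sum>\<^sub>\<infinity>b\<in>J. 1 / cmod b powr (2 * s))"
      by (rule finite_sum_le_infsum[OF summ Ffin]) (auto simp: F_def)
    finally show ?thesis .
  qed
  have lim: "((\<lambda>T. Hc A s rho T - Hc A s rho rho) \<longlongrightarrow> 0 - Hc A s rho rho) at_top"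
    by (intro tendsto_diff Hc_lim[OF s] tendsto_const)
  have "0 - Hc A s rho rho \<le> (\<Sum>\<^sub>\<infinity>b\<in>J. 1 / cmod b powr (2 * s))"
    by (rule tendsto_le[OF trivial_limit_at_top_linorder tendsto_const lim])
       (auto intro: key simp: eventually_at_top_linorder)
  thus ?thesis using Hc_rho[OF s rho, of A] by simp
qed


lemma sqrt_le_iff2: "0 \<le> t \<Longrightarrow> (sqrt a \<le> t) = (a \<le> t^2)"
  by (metis abs_of_nonneg real_sqrt_abs real_sqrt_le_iff)

lemma sqrt_gt_iff2: "0 \<le> R \<Longrightarrow> (R < sqrt a) = (R^2 < a)"
  by (metis abs_of_nonneg real_sqrt_abs real_sqrt_less_iff)

definition gneg :: "nat \<times> nat \<Rightarrow> complex" where "gneg p = Complex (real (fst p)) (- real (snd p))"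
definition gpos :: "nat \<times> nat \<Rightarrow> complex" where "gpos p = Complex (real (fst p)) (real (snd p))"

lemma cmod_gneg: "cmod (gneg (m,n)) = sqrt (real m ^ 2 + real n ^ 2)"
  by (simp add: gneg_def cmod_def)
lemma cmod_gpos: "cmod (gpos (m,n)) = sqrt (real m ^ 2 + real n ^ 2)"
  by (simp add: gpos_def cmod_def)

lemma inj_gneg: "inj gneg" by (auto simp: inj_def gneg_def complex_eq_iff)
lemma inj_gpos: "inj gpos" by (auto simp: inj_def gpos_def complex_eq_iff)

lemma I2_char: "I2 = gneg ` {p. 1 \<le> fst p \<and> 1 \<le> snd p}"
proof (intro set_eqI iffI)
  fix b assume "b \<in> I2"
  then obtain m :: nat and n :: int where mn: "b = Complex (real m) (real_of_int n)" "1 \<le> m" "n < 0"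
    unfolding I2_def by blast
  have e: "b = gneg (m, nat (-n))" using mn by (simp add: gneg_def)
  have n1: "1 \<le> nat (-n)" using mn by simp
  show "b \<in> gneg ` {p. 1 \<le> fst p \<and> 1 \<le> snd p}"
    by (rule rev_image_eqI[of "(m, nat (-n))"]) (use e n1 mn in auto)
next
  fix b assume "b \<in> gneg ` {p. 1 \<le> fst p \<and> 1 \<le> snd p}"
  then obtain m n :: nat where mn: "b = gneg (m, n)" "1 \<le> m" "1 \<le> n" by auto
  have "b = Complex (real m) (real_of_int (- int n))" using mn by (simp add: gneg_def)
  moreover have "- int n < 0" using mn by simp
  ultimately show "b \<in> I2" unfolding I2_def using mn by blast
qed

lemma I1_char: "I1 = gneg ` {p. 1 \<le> fst p \<and> 1 \<le> snd p} \<union> gpos ` {p. 1 \<le> fst p \<and> 1 \<le> snd p}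
    \<union> (\<lambda>m. Complex (real m) 0) ` {m. 1 \<le> m}"
proof (intro set_eqI iffI)
  fix b assume "b \<in> I1"
  then obtain m :: nat and n :: int where mn: "b = Complex (real m) (real_of_int n)" "1 \<le> m"
    unfolding I1_def by blast
  consider "n < 0" | "n = 0" | "0 < n" by linarith
  thus "b \<in> gneg ` {p. 1 \<le> fst p \<and> 1 \<le> snd p} \<union> gpos ` {p. 1 \<le> fst p \<and> 1 \<le> snd p}
    \<union> (\<lambda>m. Complex (real m) 0) ` {m. 1 \<le> m}"
  proof cases
    case 1
    have e: "b = gneg (m, nat (-n))" using mn 1 by (simp add: gneg_def)
    have n1: "1 \<le> nat (-n)" using 1 by simp
    have "b \<in> gneg ` {p. 1 \<le> fst p \<and> 1 \<le> snd p}"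
      by (rule rev_image_eqI[of "(m, nat (-n))"]) (use e n1 mn in auto)
    thus ?thesis by blast
  next
    case 2
    have "b \<in> (\<lambda>m. Complex (real m) 0) ` {m. 1 \<le> m}"
      by (rule rev_image_eqI[of m]) (use 2 mn in auto)
    thus ?thesis by blast
  next
    case 3
    have e: "b = gpos (m, nat n)" using mn 3 by (simp add: gpos_def)
    have n1: "1 \<le> nat n" using 3 by simp
    have "b \<in> gpos ` {p. 1 \<le> fst p \<and> 1 \<le> snd p}"
      by (rule rev_image_eqI[of "(m, nat n)"]) (use e n1 mn in auto)
    thus ?thesis by blast
  qed
next
  fix b assume b: "b \<in> gneg ` {p. 1 \<le> fst p \<and> 1 \<le> snd p} \<union> gpos ` {p. 1 \<le> fst p \<and> 1 \<le> snd p}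
    \<union> (\<lambda>m. Complex (real m) 0) ` {m. 1 \<le> m}"
  show "b \<in> I1"
  proof (cases "b \<in> gneg ` {p. 1 \<le> fst p \<and> 1 \<le> snd p}")
    case True
    then obtain m n :: nat where mn: "b = gneg (m, n)" "1 \<le> m" by auto
    have "b = Complex (real m) (real_of_int (- int n))" using mn by (simp add: gneg_def)
    thus ?thesis unfolding I1_def using mn by blast
  next
    case F1: False
    show ?thesis
    proof (cases "b \<in> gpos ` {p. 1 \<le> fst p \<and> 1 \<le> snd p}")
      case True
      then obtain m n :: nat where mn: "b = gpos (m, n)" "1 \<le> m" by auto
      have "b = Complex (real m) (real_of_int (int n))" using mn by (simp add: gpos_def)
      thus ?thesis unfolding I1_def using mn by blast
    next
      case False
      then obtain m :: nat where mn: "b = Complex (real m) 0" "1 \<le> m" using b F1 by auto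
      have "b = Complex (real m) (real_of_int 0)" using mn by simp
      thus ?thesis unfolding I1_def using mn by blast
    qed
  qed
qed

lemma quad_part:
  fixes g :: "nat \<times> nat \<Rightarrow> complex"
  assumes cm: "\<And>m n. cmod (g (m,n)) = sqrt (real m ^ 2 + real n ^ 2)"
    and R: "0 \<le> R" and t: "R \<le> t"
  shows "{b \<in> g ` {p. 1 \<le> fst p \<and> 1 \<le> snd p}. R < cmod b \<and> cmod b \<le> t} = g ` (Qset t - Qset R)"
proof -
  have t0: "0 \<le> t" using R t by simp
  have "R < cmod (g (m,n)) \<and> cmod (g (m,n)) \<le> t \<longleftrightarrow>
      \<not> (real m ^ 2 + real n ^ 2 \<le> R^2) \<and> real m ^ 2 + real n ^ 2 \<le> t^2" for m n
    unfolding cm sqrt_gt_iff2[OF R] sqrt_le_iff2[OF t0] by auto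
  thus ?thesis unfolding Qset_def by (auto simp: image_iff)
qed

lemma Qdiff_card:
  assumes "0 \<le> R" "R \<le> t"
  shows "real (card (Qset t - Qset R)) = real (card (Qset t)) - real (card (Qset R))"
proof -
  have sub: "Qset R \<subseteq> Qset t" by (rule Qset_mono) (use assms in auto)
  have f: "finite (Qset R)" "finite (Qset t)" using Qset_finite assms by auto
  have "card (Qset t - Qset R) = card (Qset t) - card (Qset R)" by (rule card_Diff_subset[OF f(1) sub])
  moreover have "card (Qset R) \<le> card (Qset t)" by (rule card_mono[OF f(2) sub])
  ultimately show ?thesis by simp
qed

lemma QR_le:
  assumes R: "2 < R"
  shows "real (card (Qset R)) \<le> pi / 4 * R^2 - R / 2 + sqrt (R^2 - (real (nat \<lfloor>R\<rfloor>))^2) / 2"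
    "real (card (Qset R)) \<le> pi / 4 * R^2"
proof -
  show a: "real (card (Qset R)) \<le> pi / 4 * R^2 - R / 2 + sqrt (R^2 - (real (nat \<lfloor>R\<rfloor>))^2) / 2"
    by (rule Qset_upper) (use R in simp)
  have "sqrt (R^2 - (real (nat \<lfloor>R\<rfloor>))^2) \<le> sqrt (R^2)" by (rule real_sqrt_le_mono) simp
  also have "\<dots> = R" using R by simp
  finally show "real (card (Qset R)) \<le> pi / 4 * R^2" using a by linarith
qed

lemma I2_set:
  assumes R: "0 \<le> R" and t: "R \<le> t"
  shows "{b \<in> {b\<in>I2. R < cmod b}. cmod b \<le> t} = gneg ` (Qset t - Qset R)"
proof -
  have "{b \<in> {b\<in>I2. R < cmod b}. cmod b \<le> t} = {b \<in> gneg ` {p. 1 \<le> fst p \<and> 1 \<le> snd p}. R < cmod b \<and> cmod b \<le> t}"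
    unfolding I2_char by auto
  also have "\<dots> = gneg ` (Qset t - Qset R)" by (rule quad_part[OF cmod_gneg R t])
  finally show ?thesis .
qed

lemma count_I2:
  assumes R: "2 < R" and t: "R + sqrt 2 \<le> t"
  shows "(pi / 2 - 2 * thetaR R) / 2 * (t^2 - (R + sqrt 2)^2) \<le> real (card {b \<in> {b\<in>I2. R < cmod b}. cmod b \<le> t})"
proof -
  note rf = rho_facts[OF R t]
  have "0 \<le> sqrt 2" by simp
  hence Rt: "R \<le> t" using t by linarith
  have tt: "2 \<le> t^2" "0 < t" using rf(1) power_mono[OF rf(1), of 2] by auto
  have R0: "0 \<le> R" using R by simp
  have "card {b \<in> {b\<in>I2. R < cmod b}. cmod b \<le> t} = card (gneg ` (Qset t - Qset R))"
    by (simp only: I2_set[OF R0 Rt])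
  also have "\<dots> = card (Qset t - Qset R)" by (rule card_image[OF inj_on_subset[OF inj_gneg]]) simp
  finally have "real (card {b \<in> {b\<in>I2. R < cmod b}. cmod b \<le> t}) = real (card (Qset t - Qset R))" by simp
  also have "\<dots> = real (card (Qset t)) - real (card (Qset R))" by (rule Qdiff_card) (use R Rt in auto)
  finally have e: "real (card {b \<in> {b\<in>I2. R < cmod b}. cmod b \<le> t}) = real (card (Qset t)) - real (card (Qset R))" .
  have "(pi / 2 - 2 * thetaR R) / 2 * (t^2 - (R + sqrt 2)^2) = (pi / 4 - arcsin (1 / (R + sqrt 2))) * (t^2 - (R + sqrt 2)^2)"
    by (simp add: thetaR_def field_simps)
  also have "\<dots> \<le> A1 t - pi / 4 * R^2" by (rule ineq_N2[OF R t])
  also have "\<dots> \<le> real (card (Qset t)) - real (card (Qset R))" using Qset_lower[OF tt] QR_le(2)[OF R] by linarith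
  finally show ?thesis unfolding e .
qed

lemma fin_I2: assumes R: "0 \<le> R" shows "finite {b \<in> {b\<in>I2. R < cmod b}. cmod b \<le> t}"
proof (cases "R \<le> t")
  case True
  show ?thesis unfolding I2_set[OF R True] using Qset_finite[of t] R True by simp
next
  case False
  hence e: "{b \<in> {b\<in>I2. R < cmod b}. cmod b \<le> t} = {}" using False by auto
  show ?thesis by (simp only: e finite.emptyI)
qed

definition hrow :: "nat \<Rightarrow> complex" where "hrow m = Complex (real m) 0"

lemma Rowset_card:
  assumes R: "0 \<le> R" and t: "R \<le> t"
  shows "t - 1 - real (nat \<lfloor>R\<rfloor>) \<le> real (card {m::nat. R < real m \<and> real m \<le> t})"
    "finite {m::nat. R < real m \<and> real m \<le> t}"
proof -
  have fin: "finite {m::nat. R < real m \<and> real m \<le> t}"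
  proof (rule finite_subset[of _ "{..nat \<lfloor>t\<rfloor>}"])
    show "{m::nat. R < real m \<and> real m \<le> t} \<subseteq> {..nat \<lfloor>t\<rfloor>}"
      by (auto simp: le_nat_iff le_floor_iff)
  qed simp
  thus "finite {m::nat. R < real m \<and> real m \<le> t}" .
  have sub: "{nat \<lfloor>R\<rfloor> + 1..nat \<lfloor>t\<rfloor>} \<subseteq> {m::nat. R < real m \<and> real m \<le> t}"
  proof
    fix m assume m: "m \<in> {nat \<lfloor>R\<rfloor> + 1..nat \<lfloor>t\<rfloor>}"
    have "R < real_of_int \<lfloor>R\<rfloor> + 1" by linarith
    moreover have "real_of_int \<lfloor>R\<rfloor> + 1 \<le> real m"
    proof -
      have "Suc (nat \<lfloor>R\<rfloor>) \<le> m" using m by simp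
      hence "real (Suc (nat \<lfloor>R\<rfloor>)) \<le> real m" by (simp only: of_nat_le_iff)
      moreover have "real (nat \<lfloor>R\<rfloor>) = real_of_int \<lfloor>R\<rfloor>" using R by simp
      ultimately show ?thesis by simp
    qed
    moreover have "real m \<le> real_of_int \<lfloor>t\<rfloor>" using m R t by (simp add: le_nat_iff)
    moreover have "real_of_int \<lfloor>t\<rfloor> \<le> t" by simp
    ultimately have "R < real m" "real m \<le> t" by linarith+
    thus "m \<in> {m::nat. R < real m \<and> real m \<le> t}" by simp
  qed
  have "card {nat \<lfloor>R\<rfloor> + 1..nat \<lfloor>t\<rfloor>} \<le> card {m::nat. R < real m \<and> real m \<le> t}"
    by (rule card_mono[OF fin sub])
  moreover have "real (card {nat \<lfloor>R\<rfloor> + 1..nat \<lfloor>t\<rfloor>}) \<ge> real (nat \<lfloor>t\<rfloor>) - real (nat \<lfloor>R\<rfloor>)"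
    by simp
  moreover have "real (nat \<lfloor>t\<rfloor>) = real_of_int \<lfloor>t\<rfloor>" using R t by simp
  moreover have "t - 1 < real_of_int \<lfloor>t\<rfloor>" by linarith
  ultimately show "t - 1 - real (nat \<lfloor>R\<rfloor>) \<le> real (card {m::nat. R < real m \<and> real m \<le> t})"
    by linarith
qed

lemma I1_set:
  assumes R: "1 \<le> R" and t: "R \<le> t"
  shows "{b \<in> {b\<in>I1. R < cmod b}. cmod b \<le> t} =
    gneg ` (Qset t - Qset R) \<union> gpos ` (Qset t - Qset R) \<union> hrow ` {m::nat. R < real m \<and> real m \<le> t}"
proof -
  have R0: "0 \<le> R" using R by simp
  have row: "{b \<in> (\<lambda>m. Complex (real m) 0) ` {m. 1 \<le> m}. R < cmod b \<and> cmod b \<le> t}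
      = hrow ` {m::nat. R < real m \<and> real m \<le> t}"
  proof (intro set_eqI iffI)
    fix b assume "b \<in> {b \<in> (\<lambda>m. Complex (real m) 0) ` {m. 1 \<le> m}. R < cmod b \<and> cmod b \<le> t}"
    then obtain m :: nat where m: "b = Complex (real m) 0" "R < cmod b" "cmod b \<le> t" by auto
    have "cmod b = real m" using m(1) by (simp add: cmod_def)
    thus "b \<in> hrow ` {m::nat. R < real m \<and> real m \<le> t}"
      using m by (intro rev_image_eqI[of m]) (auto simp: hrow_def)
  next
    fix b assume "b \<in> hrow ` {m::nat. R < real m \<and> real m \<le> t}"
    then obtain m :: nat where m: "b = hrow m" "R < real m" "real m \<le> t" by auto
    have c: "cmod b = real m" using m(1) by (simp add: cmod_def hrow_def)
    have "1 \<le> m" using m R by simp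
    hence "b \<in> (\<lambda>m. Complex (real m) 0) ` {m. 1 \<le> m}" using m(1) by (auto simp: hrow_def)
    thus "b \<in> {b \<in> (\<lambda>m. Complex (real m) 0) ` {m. 1 \<le> m}. R < cmod b \<and> cmod b \<le> t}"
      using c m by simp
  qed
  have "{b \<in> {b\<in>I1. R < cmod b}. cmod b \<le> t} =
      {b \<in> gneg ` {p. 1 \<le> fst p \<and> 1 \<le> snd p}. R < cmod b \<and> cmod b \<le> t}
      \<union> {b \<in> gpos ` {p. 1 \<le> fst p \<and> 1 \<le> snd p}. R < cmod b \<and> cmod b \<le> t}
      \<union> {b \<in> (\<lambda>m. Complex (real m) 0) ` {m. 1 \<le> m}. R < cmod b \<and> cmod b \<le> t}"
    unfolding I1_char by blast
  also have "\<dots> = gneg ` (Qset t - Qset R) \<union> gpos ` (Qset t - Qset R) \<union> hrow ` {m::nat. R < real m \<and> real m \<le> t}"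
    unfolding quad_part[OF cmod_gneg R0 t] quad_part[OF cmod_gpos R0 t] row ..
  finally show ?thesis .
qed

lemma lin3: fixes a Qt QR q D c W :: real
  assumes "a \<le> Qt" "QR \<le> q" "D = Qt - QR" "c \<le> W"
  shows "2 * (a - q) + c \<le> 2 * D + W"
  using assms by argo

lemma count_I1:
  assumes R: "2 < R" and t: "R + sqrt 2 \<le> t"
  shows "(pi - 2 * thetaR R) / 2 * (t^2 - (R + sqrt 2)^2) \<le> real (card {b \<in> {b\<in>I1. R < cmod b}. cmod b \<le> t})"
    "finite {b \<in> {b\<in>I1. R < cmod b}. cmod b \<le> t}"
proof -
  note rf = rho_facts[OF R t]
  have "0 \<le> sqrt 2" by simp
  hence Rt: "R \<le> t" using t by linarith
  have R1: "1 \<le> R" "0 \<le> R" using R by auto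
  have tt: "2 \<le> t^2" "0 < t" using rf(1) power_mono[OF rf(1), of 2] by auto
  define D where "D = Qset t - Qset R"
  define W where "W = {m::nat. R < real m \<and> real m \<le> t}"
  have fD: "finite D" using Qset_finite[of t] R1 Rt by (simp add: D_def)
  have fW: "finite W" using Rowset_card(2)[OF R1(2) Rt] by (simp add: W_def)
  have Dn: "1 \<le> snd p" if "p \<in> D" for p using that by (auto simp: D_def Qset_def)
  have imn: "Im x < 0" if xin: "x \<in> gneg ` D" for x
  proof -
    obtain p where p: "p \<in> D" "x = gneg p" using xin by blast
    have "1 \<le> real (snd p)" using Dn[OF p(1)] by simp
    thus ?thesis using p(2) by (simp add: gneg_def)
  qed
  have imp: "0 < Im x" if xin: "x \<in> gpos ` D" for x
  proof -
    obtain p where p: "p \<in> D" "x = gpos p" using xin by blast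
    have "1 \<le> real (snd p)" using Dn[OF p(1)] by simp
    thus ?thesis using p(2) by (simp add: gpos_def)
  qed
  have imh: "Im x = 0" if "x \<in> hrow ` W" for x using that by (auto simp: hrow_def)
  have d1: "gneg ` D \<inter> gpos ` D = {}" using imn imp by fastforce
  have d2: "(gneg ` D \<union> gpos ` D) \<inter> hrow ` W = {}" using imn imp imh by fastforce
  have eqs: "{b \<in> {b\<in>I1. R < cmod b}. cmod b \<le> t} = gneg ` D \<union> gpos ` D \<union> hrow ` W"
    unfolding D_def W_def by (rule I1_set[OF R1(1) Rt])
  show "finite {b \<in> {b\<in>I1. R < cmod b}. cmod b \<le> t}" unfolding eqs using fD fW by simp
  have "card (gneg ` D \<union> gpos ` D \<union> hrow ` W) = card (gneg ` D \<union> gpos ` D) + card (hrow ` W)"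
    by (rule card_Un_disjoint) (use fD fW d2 in auto)
  also have "card (gneg ` D \<union> gpos ` D) = card (gneg ` D) + card (gpos ` D)"
    by (rule card_Un_disjoint) (use fD d1 in auto)
  also have "card (gneg ` D) = card D" by (rule card_image[OF inj_on_subset[OF inj_gneg]]) simp
  also have "card (gpos ` D) = card D" by (rule card_image[OF inj_on_subset[OF inj_gpos]]) simp
  also have "card (hrow ` W) = card W" by (rule card_image) (auto simp: inj_on_def hrow_def)
  finally have c: "real (card {b \<in> {b\<in>I1. R < cmod b}. cmod b \<le> t}) = 2 * real (card D) + real (card W)"
    unfolding eqs by simp
  have cD: "real (card D) = real (card (Qset t)) - real (card (Qset R))" unfolding D_def
    by (rule Qdiff_card) (use R1 Rt in auto)
  have "(pi - 2 * thetaR R) / 2 * (t^2 - (R + sqrt 2)^2) = (pi / 2 - arcsin (1 / (R + sqrt 2))) * (t^2 - (R + sqrt 2)^2)"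
    by (simp add: thetaR_def field_simps)
  also have "\<dots> \<le> 2 * (A1 t - (pi / 4 * R^2 - R / 2 + sqrt (R^2 - (real (nat \<lfloor>R\<rfloor>))^2) / 2))
       + (t - 1 - real (nat \<lfloor>R\<rfloor>))" by (rule ineq_N1[OF R t])
  also have "\<dots> \<le> 2 * real (card D) + real (card W)"
    unfolding W_def by (rule lin3[OF Qset_lower[OF tt] QR_le(1)[OF R] cD Rowset_card(1)[OF R1(2) Rt]])
  finally show "(pi - 2 * thetaR R) / 2 * (t^2 - (R + sqrt 2)^2) \<le> real (card {b \<in> {b\<in>I1. R < cmod b}. cmod b \<le> t})"
    unfolding c .
qed

lemma thetaR_bounds:
  assumes R: "2 < R"
  shows "0 \<le> thetaR R" "thetaR R \<le> pi / 4"
proof -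
  have s2: "(141421/100000) \<le> sqrt 2" using pi_sqrt2 by auto
  have r: "3 \<le> R + sqrt 2" using R s2 by simp
  have x: "0 \<le> 1 / (R + sqrt 2)" "1 / (R + sqrt 2) \<le> 1 / 3" using r by (auto simp: field_simps)
  show "0 \<le> thetaR R" unfolding thetaR_def by (rule arcsin_nonneg) (use x in auto)
  have "1 / (R + sqrt 2) \<le> sin (pi / 4)" unfolding sin_45 using x s2 by simp
  moreover have "-1 \<le> 1 / (R + sqrt 2)" "1 / (R + sqrt 2) \<le> 1" using x by linarith+
  ultimately show "thetaR R \<le> pi / 4" unfolding thetaR_def
    by (subst arcsin_le_iff) auto
qed

lemma lattice_I2:
  assumes R: "2 < R" and s: "1 < s"
    and summ: "(\<lambda>b. 1 / cmod b powr (2 * s)) summable_on {b\<in>I2. R < cmod b}"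
  shows "(pi / 2 - 2 * thetaR R) * (1 / (2 * s - 2)) * (1 / (R + sqrt 2)) powr (2 * s - 2)
    \<le> (\<Sum>\<^sub>\<infinity>b\<in>{b\<in>I2. R < cmod b}. 1 / cmod b powr (2 * s))"
proof (rule layer_cake[OF s _ _ summ])
  show "0 < R + sqrt 2" using R by (simp add: add_pos_nonneg)
  show "0 \<le> pi / 2 - 2 * thetaR R" using thetaR_bounds[OF R] by simp
  fix b assume "b \<in> {b\<in>I2. R < cmod b}" hence "R < cmod b" by simp
  thus "0 < cmod b" using R by linarith
next
  fix t show "finite {b \<in> {b\<in>I2. R < cmod b}. cmod b \<le> t}" by (rule fin_I2) (use R in simp)
next
  fix t assume "R + sqrt 2 \<le> t"
  thus "(pi / 2 - 2 * thetaR R) / 2 * (t^2 - (R + sqrt 2)^2) \<le> real (card {b \<in> {b\<in>I2. R < cmod b}. cmod b \<le> t})"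
    by (rule count_I2[OF R])
qed

lemma lattice_I1:
  assumes R: "2 < R" and s: "1 < s"
    and summ: "(\<lambda>b. 1 / cmod b powr (2 * s)) summable_on {b\<in>I1. R < cmod b}"
  shows "(pi - 2 * thetaR R) * (1 / (2 * s - 2)) * (1 / (R + sqrt 2)) powr (2 * s - 2)
    \<le> (\<Sum>\<^sub>\<infinity>b\<in>{b\<in>I1. R < cmod b}. 1 / cmod b powr (2 * s))"
proof (rule layer_cake[OF s _ _ summ])
  show "0 < R + sqrt 2" using R by (simp add: add_pos_nonneg)
  show "0 \<le> pi - 2 * thetaR R" using thetaR_bounds[OF R] by simp
  fix b assume "b \<in> {b\<in>I1. R < cmod b}" hence "R < cmod b" by simp
  thus "0 < cmod b" using R by linarith
next
  fix t show "finite {b \<in> {b\<in>I1. R < cmod b}. cmod b \<le> t}"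
  proof (cases "R + sqrt 2 \<le> t")
    case True
    show ?thesis by (rule count_I1(2)[OF R True])
  next
    case False
    have "{b \<in> {b\<in>I1. R < cmod b}. cmod b \<le> t} \<subseteq> {b \<in> {b\<in>I1. R < cmod b}. cmod b \<le> R + sqrt 2}"
      using False by auto
    moreover have "finite {b \<in> {b\<in>I1. R < cmod b}. cmod b \<le> R + sqrt 2}" by (rule count_I1(2)[OF R]) simp
    ultimately show ?thesis using finite_subset by blast
  qed
next
  fix t assume "R + sqrt 2 \<le> t"
  thus "(pi - 2 * thetaR R) / 2 * (t^2 - (R + sqrt 2)^2) \<le> real (card {b \<in> {b\<in>I1. R < cmod b}. cmod b \<le> t})"
    by (rule count_I1(1)[OF R])
qed


lemma q_identity:
  assumes R: "0 < R"
  shows "R / (R + sqrt 5 + 5 / (4 * R)) = (R / (R + sqrt 5 / 2))^2"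
proof -
  have s5: "(sqrt 5)^2 = 5" by simp
  have p: "0 < R + sqrt 5 / 2" using R by (simp add: add_pos_nonneg)
  have "(R + sqrt 5 / 2)^2 = R * (R + sqrt 5 + 5 / (4 * R))"
    using R s5 by (simp add: power2_eq_square field_simps)
  moreover have X: "0 < R + sqrt 5 + 5 / (4 * R)" using R by (simp add: add_pos_nonneg)
  ultimately show ?thesis using R by (simp add: power_divide power2_eq_square)
qed

context eig
begin

lemma term_bound:
  assumes z: "0 \<le> Re z" "Re z \<le> 1" "\<bar>Im z\<bar> \<le> 1/2" and b: "b \<in> B" and R: "2 < R" and bR: "R < cmod b"
  shows "CRs R s * v 0 * (1 / cmod b powr (2 * s)) \<le> v (theta b z) / cmod (z + b) powr (2 * s)"
proof -
  define Bb where "Bb = cmod b"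
  define c where "c = sqrt 5 / 2"
  define w where "w = theta b z"
  define Z where "Z = cmod (z + b)"
  have rb: "1 \<le> Re b" by (rule Bre[OF b])
  have Z1: "1 \<le> Z" unfolding Z_def by (rule cmod_ge1[OF z(1) rb])
  have wD: "w \<in> Dk" unfolding w_def by (rule theta_Dk[OF z(1) rb])
  have cw: "cmod w = 1 / Z" by (simp add: w_def Z_def theta_def norm_divide)
  have sq: "Bb^2 - Bb \<le> Z^2"
  proof -
    have Zs: "Z^2 = (Re z + Re b)^2 + (Im z + Im b)^2" by (simp add: Z_def cmod_power2)
    have Bs: "Bb^2 = (Re b)^2 + (Im b)^2" by (simp add: Bb_def cmod_power2)
    have a1: "(Re b)^2 \<le> (Re z + Re b)^2" using z rb by (intro power_mono) auto
    have "\<bar>2 * Im z * Im b\<bar> = 2 * \<bar>Im z\<bar> * \<bar>Im b\<bar>" by (simp add: abs_mult)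
    also have "\<dots> \<le> 2 * (1/2) * \<bar>Im b\<bar>" using z(3) by (intro mult_right_mono) auto
    finally have "- \<bar>Im b\<bar> \<le> 2 * Im z * Im b" by simp
    moreover have "(Im z + Im b)^2 = (Im z)^2 + 2 * Im z * Im b + (Im b)^2"
      by (simp add: power2_eq_square algebra_simps)
    moreover have "0 \<le> (Im z)^2" by simp
    ultimately have a2: "(Im b)^2 - \<bar>Im b\<bar> \<le> (Im z + Im b)^2" by linarith
    have a3: "\<bar>Im b\<bar> \<le> Bb" unfolding Bb_def by (rule abs_Im_le_cmod)
    show ?thesis using Zs Bs a1 a2 a3 by linarith
  qed
  have RR: "R^2 - R \<le> Bb^2 - Bb"
  proof -
    have "0 \<le> (Bb - R) * (Bb + R - 1)" using bR R by (intro mult_nonneg_nonneg) (auto simp: Bb_def)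
    thus ?thesis by (simp add: power2_eq_square algebra_simps)
  qed
  have RRp: "0 < R^2 - R" using R by (simp add: power2_eq_square)
  have sZ: "sqrt (R^2 - R) \<le> Z"
  proof -
    have "sqrt (R^2 - R) \<le> sqrt (Z^2)" using sq RR by (intro real_sqrt_le_mono) linarith
    thus ?thesis using Z1 by simp
  qed
  have sRp: "0 < sqrt (R^2 - R)" using RRp by simp
  have cwle: "cmod w \<le> 1 / sqrt (R^2 - R)" unfolding cw using sZ sRp Z1
    by (intro divide_left_mono) (auto intro!: mult_pos_pos)
  have s25: "2 \<le> sqrt 5" by (rule real_le_rsqrt) simp
  have "2 * s * cmod w \<le> 2 * s * (1 / sqrt (R^2 - R))" using cwle spos by (intro mult_left_mono) auto
  also have "\<dots> \<le> sqrt 5 * s * (1 / sqrt (R^2 - R))" using s25 spos sRp by (intro mult_right_mono) auto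
  finally have ex: "exp (- sqrt 5 * s / sqrt (R^2 - R)) \<le> exp (- (2 * s * cmod w))" by simp
  have v0: "0 < v 0" using vpos by (simp add: Dk_def)
  have e1: "exp (- sqrt 5 * s / sqrt (R^2 - R)) * v 0 \<le> v w"
    using mult_right_mono[OF ex, of "v 0"] v0 v_lower[OF wD] by linarith
  define q where "q = R / (R + sqrt 5 + 5 / (4 * R))"
  have c0: "0 \<le> c" by (simp add: c_def)
  have Bb0: "R \<le> Bb" using bR by (simp add: Bb_def)
  have qe: "q = (R / (R + c))^2" unfolding q_def c_def by (rule q_identity) (use R in simp)
  have mono: "R / (R + c) \<le> Bb / (Bb + c)"
  proof -
    have "R * (Bb + c) \<le> Bb * (R + c)" using Bb0 c0 by (simp add: algebra_simps mult_right_mono)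
    moreover have "0 < R + c" "0 < Bb + c" using R Bb0 c0 by auto
    ultimately show ?thesis by (simp add: divide_le_eq le_divide_eq mult.commute)
  qed
  have q0: "0 \<le> R / (R + c)" using R c0 by simp
  have qle: "q \<le> (Bb / (Bb + c))^2" unfolding qe using q0 mono by (intro power_mono) auto
  have cz: "cmod z \<le> c"
  proof -
    have "(cmod z)^2 = (Re z)^2 + (Im z)^2" by (simp add: cmod_power2)
    also have "\<dots> \<le> 1 + 1/4"
    proof -
      have "(Re z)^2 \<le> 1" using z by (simp add: power_le_one)
      moreover have "(Im z)^2 \<le> (1/2)^2" using z(3) by (metis abs_le_square_iff abs_of_nonneg
            zero_le_divide_iff zero_le_one zero_le_numeral)
      ultimately show ?thesis by (simp add: power2_eq_square)
    qed
    also have "\<dots> = c^2" by (simp add: c_def power_divide)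
    finally show ?thesis using c0 by (rule power2_le_imp_le)
  qed
  have Zle: "Z \<le> Bb + c"
  proof -
    have "Z \<le> cmod z + cmod b" unfolding Z_def by (rule norm_triangle_ineq)
    thus ?thesis using cz by (simp add: Bb_def)
  qed
  have Bc: "0 < Bb + c" using Bb0 R c0 by simp
  have qpow: "q powr s \<le> (Bb / (Bb + c)) powr (2 * s)"
  proof -
    have "q powr s \<le> ((Bb / (Bb + c))^2) powr s" using qle spos by (intro powr_mono2) (auto simp: qe)
    also have "((Bb / (Bb + c))^2) powr s = (Bb / (Bb + c)) powr (2 * s)"
    proof -
      have "0 < Bb / (Bb + c)" using Bb0 R Bc by simp
      hence "(Bb / (Bb + c))^2 = (Bb / (Bb + c)) powr 2" by (simp add: powr_realpow)
      thus ?thesis by (simp add: powr_powr)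
    qed
    finally show ?thesis .
  qed
  have Zpow: "Z powr (2 * s) \<le> (Bb + c) powr (2 * s)" using Zle Z1 spos by (intro powr_mono2) auto
  have prod: "q powr s * Z powr (2 * s) \<le> Bb powr (2 * s)"
  proof -
    have "q powr s * Z powr (2 * s) \<le> (Bb / (Bb + c)) powr (2 * s) * (Bb + c) powr (2 * s)"
      using qpow Zpow by (intro mult_mono) auto
    also have "\<dots> = (Bb / (Bb + c) * (Bb + c)) powr (2 * s)" by (simp only: powr_mult)
    also have "Bb / (Bb + c) * (Bb + c) = Bb" using Bc by simp
    finally show ?thesis .
  qed
  have Zp: "0 < Z powr (2 * s)" using Z1 by simp
  have Bp: "0 < Bb powr (2 * s)" using Bb0 R by simp
  have qz: "q powr s * (1 / Bb powr (2 * s)) \<le> 1 / Z powr (2 * s)"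
    using prod Zp Bp by (simp add: field_simps)
  have "CRs R s * v 0 * (1 / cmod b powr (2 * s))
      = (exp (- sqrt 5 * s / sqrt (R^2 - R)) * v 0) * (q powr s * (1 / Bb powr (2 * s)))"
    by (simp add: CRs_def q_def Bb_def)
  also have "\<dots> \<le> v w * (1 / Z powr (2 * s))"
    using e1 qz v0 vpos[OF wD] by (intro mult_mono) auto
  finally show ?thesis by (simp add: w_def Z_def)
qed

end

lemma has_sum_inf_contra:
  fixes f :: "'a \<Rightarrow> real"
  assumes hs: "(f has_sum S) A" and inf: "infinite A" and lb: "\<And>a. a \<in> A \<Longrightarrow> c \<le> f a" and c: "0 < c"
  shows False
proof -
  obtain n :: nat where n: "S < real n * c" using reals_Archimedean3[OF c] by blast
  obtain F where F: "finite F" "card F = n" "F \<subseteq> A" using infinite_arbitrarily_large[OF inf] by blast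
  have "real (card F) * c \<le> sum f F" by (rule sum_bounded_below) (use F lb in auto)
  moreover have "sum f F \<le> S"
  proof (rule finite_sum_le_has_sum[OF hs F(1) F(3)])
    fix x assume "x \<in> A - F"
    thus "0 \<le> f x" using lb[of x] c by auto
  qed
  ultimately show False using n F(2) by simp
qed

lemma aux_div: "0 < (K::real) \<Longrightarrow> K * h \<le> g \<Longrightarrow> h \<le> (1 / K) * g"
  by (simp add: pos_le_divide_eq mult.commute)

lemma I1_re: "b \<in> I1 \<Longrightarrow> 1 \<le> Re b"
  unfolding I1_def by auto

theorem theorem5p13:
  fixes U :: "complex set" and B :: "complex set" and s R :: real and v :: "complex \<Rightarrow> real"
  assumes "bounded U" and "open U" and "mildly_regular U"
    and "ball (1/2) (1/2) \<subseteq> U" and "cball (1/2) (1/2) \<subseteq> closure U"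
    and "\<forall>z\<in>U. Re z > 0"
    and "\<forall>z\<in>closure U. 0 \<le> Re z \<and> Re z \<le> 1 \<and> \<bar>Im z\<bar> \<le> 1/2"
    and "B \<subseteq> I1" and "infinite B"
    and "s > tau B"
    and "continuous_on (closure U) v" and "\<forall>z\<in>closure U. v z > 0"
    and "\<exists>lam. \<forall>z\<in>closure U.
           ((\<lambda>b. norm (z + b) powr (-2 * s) * v (theta b z)) has_sum (lam * v z)) B"
    and "R > 2"
  shows "(\<forall>z\<in>closure U.
            (\<Sum>\<^sub>\<infinity>b\<in>{b\<in>B. norm b > R}. v (theta b z) / norm (z + b) powr (2 * s))
            \<ge> CRs R s * v 0 * (\<Sum>\<^sub>\<infinity>b\<in>{b\<in>B. norm b > R}. 1 / norm b powr (2 * s)))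
       \<and> (B = I1 \<and> s > 1 \<longrightarrow> (\<forall>z\<in>closure U.
            (\<Sum>\<^sub>\<infinity>b\<in>{b\<in>I1. norm b > R}. v (theta b z) / norm (z + b) powr (2 * s))
            \<ge> CRs R s * v 0 * (pi - 2 * thetaR R) * (1 / (2 * s - 2))
                * (1 / (R + sqrt 2)) powr (2 * s - 2)))
       \<and> (B = I2 \<and> s > 1 \<longrightarrow> (\<forall>z\<in>closure U.
            (\<Sum>\<^sub>\<infinity>b\<in>{b\<in>I2. norm b > R}. v (theta b z) / norm (z + b) powr (2 * s))
            \<ge> CRs R s * v 0 * (pi / 2 - 2 * thetaR R) * (1 / (2 * s - 2))
                * (1 / (R + sqrt 2)) powr (2 * s - 2)))"
proof -
  obtain lam where lam: "\<forall>z\<in>closure U.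
      ((\<lambda>b. norm (z + b) powr (-2 * s) * v (theta b z)) has_sum (lam * v z)) B"
    using assms(13) by blast
  have DkU: "Dk \<subseteq> closure U" using assms(5) by (simp add: Dk_def)
  have Bre: "\<And>b. b \<in> B \<Longrightarrow> 1 \<le> Re b" using assms(8) I1_re by blast
  have Bne: "B \<noteq> {}" using assms(9) by auto
  have vposD: "\<And>z. z \<in> Dk \<Longrightarrow> 0 < v z" using assms(12) DkU by blast
  have vcontD: "continuous_on Dk v" by (rule continuous_on_subset[OF assms(11) DkU])
  have eqD: "\<And>z. z \<in> Dk \<Longrightarrow> ((\<lambda>b. cmod (z + b) powr (-2 * s) * v (theta b z)) has_sum (lam * v z)) B"
    using lam DkU by blast
  have z0: "(0::complex) \<in> Dk" by (simp add: Dk_def)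
  have spos: "0 < s"
  proof (rule ccontr)
    assume "\<not> 0 < s"
    hence s0: "0 \<le> -2 * s" by simp
    obtain x0 where x0: "x0 \<in> Dk" "\<forall>y\<in>Dk. v x0 \<le> v y"
      using continuous_attains_inf[OF _ _ vcontD] z0 by (auto simp: Dk_def)
    have c0: "0 < v x0" using vposD x0 by blast
    show False
    proof (rule has_sum_inf_contra[OF eqD[OF z0] assms(9) _ c0])
      fix b assume b: "b \<in> B"
      have b1: "1 \<le> cmod (0 + b)" using cmod_ge1[of 0 b] Bre[OF b] by simp
      have p1: "1 \<le> cmod (0 + b) powr (-2 * s)" by (rule ge_one_powr_ge_zero[OF b1 s0])
      have t: "theta b 0 \<in> Dk" using theta_Dk[of 0 b] Bre[OF b] by simp
      have "v x0 \<le> v (theta b 0)" using x0 t by blast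
      hence "1 * v x0 \<le> cmod (0 + b) powr (-2 * s) * v (theta b 0)"
        using p1 c0 by (intro mult_mono) auto
      thus "v x0 \<le> cmod (0 + b) powr (-2 * s) * v (theta b 0)" by simp
    qed
  qed
  interpret E: eig B s v lam
    by unfold_locales (use Bre Bne spos vposD vcontD eqD in auto)
  have v0: "0 < v 0" using vposD z0 by blast
  have Cpos: "0 < CRs R s"
  proof -
    have "0 < R / (R + sqrt 5 + 5 / (4 * R))" using assms(14) by (simp add: add_pos_nonneg)
    hence "0 < (R / (R + sqrt 5 + 5 / (4 * R))) powr s" by (simp only: powr_gt_zero)
    thus ?thesis unfolding CRs_def by (intro mult_pos_pos) simp_all
  qed
  have CV: "0 < CRs R s * v 0" using Cpos v0 by simp
  have zprops: "0 \<le> Re z" "Re z \<le> 1" "\<bar>Im z\<bar> \<le> 1/2" if "z \<in> closure U" for z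
    using assms(7) that by auto
  have gform: "v (theta b z) / norm (z + b) powr (2 * s) = norm (z + b) powr (-2 * s) * v (theta b z)" for z b
    by (simp add: powr_minus_divide)
  have gsum: "(\<lambda>b. v (theta b z) / norm (z + b) powr (2 * s)) summable_on {b\<in>B. norm b > R}"
    if z: "z \<in> closure U" for z
  proof -
    have "(\<lambda>b. norm (z + b) powr (-2 * s) * v (theta b z)) summable_on B"
      using lam z unfolding summable_on_def by blast
    hence "(\<lambda>b. v (theta b z) / norm (z + b) powr (2 * s)) summable_on B" unfolding gform .
    thus ?thesis by (rule summable_on_subset_banach) auto
  qed
  have zU: "(0::complex) \<in> closure U" using z0 DkU by blast
  have hsum: "(\<lambda>b. 1 / norm b powr (2 * s)) summable_on {b\<in>B. norm b > R}"
  proof (rule summable_on_comparison_test)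
    show "(\<lambda>b. (1 / (CRs R s * v 0)) * (v (theta b 0) / norm (0 + b) powr (2 * s))) summable_on {b\<in>B. norm b > R}"
      by (rule summable_on_cmult_right[OF gsum[OF zU]])
  next
    fix b assume b: "b \<in> {b\<in>B. norm b > R}"
    have "CRs R s * v 0 * (1 / cmod b powr (2 * s)) \<le> v (theta b 0) / cmod (0 + b) powr (2 * s)"
      by (rule E.term_bound) (use b assms(14) in auto)
    thus "1 / norm b powr (2 * s) \<le> (1 / (CRs R s * v 0)) * (v (theta b 0) / norm (0 + b) powr (2 * s))"
      by (rule aux_div[OF CV])
    show "0 \<le> 1 / norm b powr (2 * s)" by simp
  qed
  have part1: "CRs R s * v 0 * (\<Sum>\<^sub>\<infinity>b\<in>{b\<in>B. norm b > R}. 1 / norm b powr (2 * s))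
      \<le> (\<Sum>\<^sub>\<infinity>b\<in>{b\<in>B. norm b > R}. v (theta b z) / norm (z + b) powr (2 * s))"
    if z: "z \<in> closure U" for z
  proof -
    have "CRs R s * v 0 * (\<Sum>\<^sub>\<infinity>b\<in>{b\<in>B. norm b > R}. 1 / norm b powr (2 * s))
        = (\<Sum>\<^sub>\<infinity>b\<in>{b\<in>B. norm b > R}. CRs R s * v 0 * (1 / norm b powr (2 * s)))"
      by (rule infsum_cmult_right'[symmetric])
    also have "\<dots> \<le> (\<Sum>\<^sub>\<infinity>b\<in>{b\<in>B. norm b > R}. v (theta b z) / norm (z + b) powr (2 * s))"
    proof (rule infsum_mono)
      show "(\<lambda>b. CRs R s * v 0 * (1 / norm b powr (2 * s))) summable_on {b\<in>B. norm b > R}"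
        by (rule summable_on_cmult_right[OF hsum])
      show "(\<lambda>b. v (theta b z) / norm (z + b) powr (2 * s)) summable_on {b\<in>B. norm b > R}"
        by (rule gsum[OF z])
      fix b assume b: "b \<in> {b\<in>B. norm b > R}"
      show "CRs R s * v 0 * (1 / norm b powr (2 * s)) \<le> v (theta b z) / norm (z + b) powr (2 * s)"
        by (rule E.term_bound) (use b assms(14) zprops[OF z] in auto)
    qed
    finally show ?thesis .
  qed
  have part2: "CRs R s * v 0 * (pi - 2 * thetaR R) * (1 / (2 * s - 2)) * (1 / (R + sqrt 2)) powr (2 * s - 2)
      \<le> (\<Sum>\<^sub>\<infinity>b\<in>{b\<in>I1. norm b > R}. v (theta b z) / norm (z + b) powr (2 * s))"
    if BI: "B = I1" and s1: "s > 1" and z: "z \<in> closure U" for z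
  proof -
    have hs: "(\<lambda>b. 1 / cmod b powr (2 * s)) summable_on {b\<in>I1. R < cmod b}" using hsum BI by simp
    have "CRs R s * v 0 * (pi - 2 * thetaR R) * (1 / (2 * s - 2)) * (1 / (R + sqrt 2)) powr (2 * s - 2)
        = CRs R s * v 0 * ((pi - 2 * thetaR R) * (1 / (2 * s - 2)) * (1 / (R + sqrt 2)) powr (2 * s - 2))"
      by (simp add: mult.assoc)
    also have "\<dots> \<le> CRs R s * v 0 * (\<Sum>\<^sub>\<infinity>b\<in>{b\<in>I1. R < cmod b}. 1 / cmod b powr (2 * s))"
      by (rule mult_left_mono[OF lattice_I1[OF assms(14) s1 hs]]) (use CV in simp)
    also have "\<dots> \<le> (\<Sum>\<^sub>\<infinity>b\<in>{b\<in>I1. norm b > R}. v (theta b z) / norm (z + b) powr (2 * s))"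
      using part1[OF z] BI by simp
    finally show ?thesis .
  qed
  have part3: "CRs R s * v 0 * (pi / 2 - 2 * thetaR R) * (1 / (2 * s - 2)) * (1 / (R + sqrt 2)) powr (2 * s - 2)
      \<le> (\<Sum>\<^sub>\<infinity>b\<in>{b\<in>I2. norm b > R}. v (theta b z) / norm (z + b) powr (2 * s))"
    if BI: "B = I2" and s1: "s > 1" and z: "z \<in> closure U" for z
  proof -
    have hs: "(\<lambda>b. 1 / cmod b powr (2 * s)) summable_on {b\<in>I2. R < cmod b}" using hsum BI by simp
    have "CRs R s * v 0 * (pi / 2 - 2 * thetaR R) * (1 / (2 * s - 2)) * (1 / (R + sqrt 2)) powr (2 * s - 2)
        = CRs R s * v 0 * ((pi / 2 - 2 * thetaR R) * (1 / (2 * s - 2)) * (1 / (R + sqrt 2)) powr (2 * s - 2))"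
      by (simp add: mult.assoc)
    also have "\<dots> \<le> CRs R s * v 0 * (\<Sum>\<^sub>\<infinity>b\<in>{b\<in>I2. R < cmod b}. 1 / cmod b powr (2 * s))"
      by (rule mult_left_mono[OF lattice_I2[OF assms(14) s1 hs]]) (use CV in simp)
    also have "\<dots> \<le> (\<Sum>\<^sub>\<infinity>b\<in>{b\<in>I2. norm b > R}. v (theta b z) / norm (z + b) powr (2 * s))"
      using part1[OF z] BI by simp
    finally show ?thesis .
  qed
  show ?thesis using part1 part2 part3 by blast
qed


end
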